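(* Let $(X,\sigma)$ be an infinite mixing one-sided or two-sided synchronizing subshift, let $(Y,g)$ be a dynamical system, and let $\pi\colon(X,\sigma)\to(Y,g)$ be a factor map such that $\pi^{-1}(y)$ is at most countable for each $y\in Y$. Then there exist $\varepsilon>0$, $k\in\mathbb N$ and a dense Mycielski set $T\subset Y$ with $g^k(T)\subset T$ which is syndetically $\varepsilon$-scrambled for $g$.
   Context: A dynamical system $(Y,g)$: compact metric space $Y$ with continuous $g$. A factor map is a continuous surjection with $\pi\circ\sigma=g\circ\pi$. Synchronizing word $s\in L(X)$: $us,sv\in L(X)\Rightarrow usv\in L(X)$; synchronizing subshift: transitive subshift with a synchronizing word. Mixing: $\{n:\sigma^n(U)\cap V\ne\emptyset\}$ cofinite for all nonempty open $U,V$. Syndetic: subset of $\mathbb N$ meeting every set with arbitrarily long runs of consecutive integers. $\mathrm{Asy}(g)=\{(x,y):d(g^nx,g^ny)\to0\}$, $\mathrm{SProx}(g)=\{(x,y):\{n:d(g^nx,g^ny)<\eta\}$ syndetic for all $\eta>0\}$. Syndetically $\varepsilon$-scrambled set: at least two points, every distinct pair in $\mathrm{SProx}(g)\setminus\mathrm{Asy}(g)$ with $\limsup_n d(g^nx,g^ny)\ge\varepsilon$. Mycielski set: countable union of Cantor sets. *)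

theory Defs
  imports "HOL-Analysis.Analysis"
begin

text \<open>Shift map, for both one-sided (index type nat) and two-sided (index type int) sequences.\<close>
definition shift :: "('i::comm_semiring_1 \<Rightarrow> 'a) \<Rightarrow> ('i \<Rightarrow> 'a)" where
  "shift x = (\<lambda>n. x (n + 1))"

definition shift_top :: "('i \<Rightarrow> 'a) topology" where
  "shift_top = product_topology (\<lambda>_. discrete_topology UNIV) UNIV"

definition one_sided_subshift :: "(nat \<Rightarrow> 'a::finite) set \<Rightarrow> bool" where
  "one_sided_subshift X \<longleftrightarrow> X \<noteq> {} \<and> closedin shift_top X \<and> shift ` X \<subseteq> X"

definition two_sided_subshift :: "(int \<Rightarrow> 'a::finite) set \<Rightarrow> bool" where
  "two_sided_subshift X \<longleftrightarrow> X \<noteq> {} \<and> closedin shift_top X \<and> shift ` X = X"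

definition language :: "('i::comm_semiring_1 \<Rightarrow> 'a) set \<Rightarrow> 'a list set" where
  "language X = {map (\<lambda>j. x (i + of_nat j)) [0..<n] | x i n. x \<in> X}"

definition synchronizing_word :: "('i::comm_semiring_1 \<Rightarrow> 'a) set \<Rightarrow> 'a list \<Rightarrow> bool" where
  "synchronizing_word X s \<longleftrightarrow> s \<in> language X \<and>
     (\<forall>u v. u @ s \<in> language X \<and> s @ v \<in> language X \<longrightarrow> u @ s @ v \<in> language X)"

definition transitive_sys :: "'x topology \<Rightarrow> 'x set \<Rightarrow> ('x \<Rightarrow> 'x) \<Rightarrow> bool" where
  "transitive_sys T X f \<longleftrightarrow>
     (\<forall>U V. openin (subtopology T X) U \<and> U \<noteq> {} \<and> openin (subtopology T X) V \<and> V \<noteq> {}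
        \<longrightarrow> (\<exists>n. (f ^^ n) ` U \<inter> V \<noteq> {}))"

definition mixing_sys :: "'x topology \<Rightarrow> 'x set \<Rightarrow> ('x \<Rightarrow> 'x) \<Rightarrow> bool" where
  "mixing_sys T X f \<longleftrightarrow>
     (\<forall>U V. openin (subtopology T X) U \<and> U \<noteq> {} \<and> openin (subtopology T X) V \<and> V \<noteq> {}
        \<longrightarrow> finite {n. (f ^^ n) ` U \<inter> V = {}})"

definition synchronizing_subshift :: "('i::comm_semiring_1 \<Rightarrow> 'a) set \<Rightarrow> bool" where
  "synchronizing_subshift X \<longleftrightarrow> transitive_sys shift_top X shift \<and> (\<exists>s. synchronizing_word X s)"

definition factor_map ::
  "('i::comm_semiring_1 \<Rightarrow> 'a) set \<Rightarrow> 'b::metric_space set \<Rightarrow> ('b \<Rightarrow> 'b) \<Rightarrow> (('i \<Rightarrow> 'a) \<Rightarrow> 'b) \<Rightarrow> bool" where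
  "factor_map X Y g \<pi> \<longleftrightarrow> continuous_map (subtopology shift_top X) (top_of_set Y) \<pi> \<and>
     \<pi> ` X = Y \<and> (\<forall>x\<in>X. \<pi> (shift x) = g (\<pi> x))"

definition syndetic :: "nat set \<Rightarrow> bool" where
  "syndetic S \<longleftrightarrow> (\<forall>A. (\<forall>L. \<exists>a. {a..<a+L} \<subseteq> A) \<longrightarrow> S \<inter> A \<noteq> {})"

definition Asy :: "('b::metric_space \<Rightarrow> 'b) \<Rightarrow> ('b \<times> 'b) set" where
  "Asy g = {(x, y). (\<lambda>n. dist ((g ^^ n) x) ((g ^^ n) y)) \<longlonglongrightarrow> 0}"

definition SProx :: "('b::metric_space \<Rightarrow> 'b) \<Rightarrow> ('b \<times> 'b) set" where
  "SProx g = {(x, y). \<forall>\<eta>>0. syndetic {n. dist ((g ^^ n) x) ((g ^^ n) y) < \<eta>}}"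

definition synd_eps_scrambled :: "('b::metric_space \<Rightarrow> 'b) \<Rightarrow> real \<Rightarrow> 'b set \<Rightarrow> bool" where
  "synd_eps_scrambled g \<epsilon> T \<longleftrightarrow> (\<exists>x\<in>T. \<exists>y\<in>T. x \<noteq> y) \<and>
     (\<forall>x\<in>T. \<forall>y\<in>T. x \<noteq> y \<longrightarrow> (x, y) \<in> SProx g - Asy g \<and>
        limsup (\<lambda>n. ereal (dist ((g ^^ n) x) ((g ^^ n) y))) \<ge> ereal \<epsilon>)"

definition cantor_set :: "'b::metric_space set \<Rightarrow> bool" where
  "cantor_set C \<longleftrightarrow> C \<noteq> {} \<and> compact C \<and> (\<forall>x\<in>C. x islimpt C) \<and>
     (\<forall>x\<in>C. connected_component_set C x = {x})"

definition mycielski_set :: "'b::metric_space set \<Rightarrow> bool" where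
  "mycielski_set T \<longleftrightarrow> (\<exists>\<C>. countable \<C> \<and> (\<forall>C\<in>\<C>. cantor_set C) \<and> T = \<Union>\<C>)"

end

theory Submission
  imports Defs "HOL-Library.Nat_Bijection"
begin

definition win :: "(int \<Rightarrow> 'a) \<Rightarrow> int \<Rightarrow> nat \<Rightarrow> 'a list" where
  "win z i n = map (\<lambda>j. z (i + int j)) [0..<n]"

lemma length_win[simp]: "length (win z i n) = n"
  by (simp add: win_def)

lemma win_nth[simp]: "j < n \<Longrightarrow> win z i n ! j = z (i + int j)"
  by (simp add: win_def)

lemma win_append: "win z i (a + b) = win z i a @ win z (i + int a) b"
  by (rule nth_equalityI) (auto simp: nth_append add.assoc)

lemma win_eqI: "length w = n \<Longrightarrow> (\<And>j. j < n \<Longrightarrow> z (i + int j) = w ! j) \<Longrightarrow> win z i n = w"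
  by (rule nth_equalityI) auto

lemma win_sub: "j + m \<le> n \<Longrightarrow> win z (i + int j) m = drop j (take (j + m) (win z i n))"
  by (rule nth_equalityI) (auto simp: add.assoc)

locale lang =
  fixes L :: "'a list set" and s :: "'a list"
  assumes fact: "w \<in> L \<Longrightarrow> drop i (take j w) \<in> L"
  and sync: "u @ s \<in> L \<Longrightarrow> s @ v \<in> L \<Longrightarrow> u @ s @ v \<in> L"
  and s_in: "s \<in> L"
  and mix: "u \<in> L \<Longrightarrow> v \<in> L \<Longrightarrow> \<exists>N. \<forall>n\<ge>N. \<exists>W\<in>L. length W = n + length v \<and>
              take (length u) W = u \<and> drop n W = v"
begin

definition good :: "(int \<Rightarrow> 'a) \<Rightarrow> bool" where
  "good z \<longleftrightarrow> (\<forall>i n. win z i n \<in> L)"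

lemma strict_mono_int_grow:
  fixes f :: "int \<Rightarrow> int"
  assumes "strict_mono f"
  shows "f k + int m \<le> f (k + int m)"
proof (induction m)
  case 0 then show ?case by simp
next
  case (Suc m)
  have "f (k + int m) < f (k + int (Suc m))" using assms by (simp add: strict_mono_def)
  then show ?case using Suc by simp
qed

lemma good_seg:
  fixes f :: "int \<Rightarrow> int"
  assumes mono: "strict_mono f"
    and segL: "\<And>k. win z (f k) (nat (f (k + 1) - f k) + length s) \<in> L"
    and segs: "\<And>k. win z (f k) (length s) = s"
  shows "good z"
proof -
  have claim: "win z (f k) (nat (f (k + int d) - f k) + length s) \<in> L" for d k
  proof (induction d arbitrary: k)
    case 0 then show ?case using segs s_in by simp
  next
    case (Suc d)
    define a where "a = nat (f (k + 1) - f k)"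
    define b where "b = nat (f (k + 1 + int d) - f (k + 1))"
    have fa: "f (k+1) = f k + int a" using mono unfolding a_def strict_mono_def
      by (smt (verit) nat_0_le)
    have fb: "f (k + 1 + int d) = f (k+1) + int b"
      using strict_mono_int_grow[OF mono, of "k+1" d] unfolding b_def by simp
    have tot: "nat (f (k + int (Suc d)) - f k) + length s = a + (length s + b)"
      using fa fb by (simp add: add.assoc)
    have 1: "win z (f k) a @ s \<in> L"
      using segL[of k] win_append[of z "f k" a "length s"] segs[of "k+1"] fa
      unfolding a_def[symmetric] by simp
    have 2: "s @ win z (f (k+1) + int (length s)) b \<in> L"
      using Suc[of "k+1"] win_append[of z "f (k+1)" "length s" b] segs[of "k+1"]
      unfolding b_def[symmetric] by (simp add: add.commute)
    have "win z (f k) (a + (length s + b)) = win z (f k) a @ s @ win z (f (k+1) + int (length s)) b"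
      using win_append[of z "f k" a "length s + b"] win_append[of z "f k + int a" "length s" b] segs[of "k+1"] fa
      by simp
    then show ?case using sync[OF 1 2] tot by (simp add: ac_simps)
  qed
  show ?thesis unfolding good_def
  proof (intro allI)
    fix i n
    define m where "m = nat (f 0 - i)"
    have g1: "f (- int m) + int m \<le> f 0"
      using strict_mono_int_grow[OF mono, of "- int m" m] by simp
    define k where "k = - int m"
    have ki: "f k \<le> i" using g1 unfolding k_def m_def by linarith
    define d where "d = nat (i + int n - f k)"
    have kd: "f k + int d \<le> f (k + int d)" by (rule strict_mono_int_grow[OF mono])
    have W: "win z (f k) (nat (f (k + int d) - f k) + length s) \<in> L" by (rule claim)
    define j where "j = nat (i - f k)"
    have "win z (f k + int j) n = drop j (take (j + n) (win z (f k) (nat (f (k + int d) - f k) + length s)))"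
      by (rule win_sub) (use kd ki in \<open>simp add: d_def j_def\<close>)
    moreover have "f k + int j = i" using ki by (simp add: j_def)
    ultimately show "win z i n \<in> L" using fact[OF W] by simp
  qed
qed

end

lemma int_strict_mono_step:
  fixes f :: "int \<Rightarrow> int"
  assumes step: "\<And>k. f k < f (k + 1)"
  shows "strict_mono f"
proof (rule strict_monoI)
  fix x y :: int assume xy: "x < y"
  have "f x < f (x + 1 + int d)" for d
  proof (induction d)
    case 0 then show ?case using step by simp
  next
    case (Suc d)
    have "f (x + 1 + int d) < f (x + 1 + int d + 1)" by (rule step)
    then show ?case using Suc by (simp add: add.assoc)
  qed
  from this[of "nat (y - x - 1)"] xy show "f x < f y" by simp
qed

context lang
begin

lemma blocks_exist:
  assumes u0: "u0 \<in> L" and u1: "u1 \<in> L" and len: "length u0 = length u1"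
  shows "\<exists>B0 B1 p off. 0 < p \<and> length s \<le> p \<and> B0 \<in> L \<and> B1 \<in> L \<and>
     length B0 = p + length s \<and> length B1 = p + length s \<and>
     take (length s) B0 = s \<and> take (length s) B1 = s \<and> drop p B0 = s \<and> drop p B1 = s \<and>
     drop off (take (off + length u0) B0) = u0 \<and> drop off (take (off + length u1) B1) = u1"
proof -
  obtain N0 where N0: "\<forall>n\<ge>N0. \<exists>W\<in>L. length W = n + length u0 \<and> take (length s) W = s \<and> drop n W = u0"
    using mix[OF s_in u0] by blast
  obtain N1 where N1: "\<forall>n\<ge>N1. \<exists>W\<in>L. length W = n + length u1 \<and> take (length s) W = s \<and> drop n W = u1"
    using mix[OF s_in u1] by blast
  define n1 where "n1 = max (max N0 N1) (length s + 1)"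
  have g0: "n1 \<ge> N0" and g1: "n1 \<ge> N1" unfolding n1_def by auto
  obtain W0 where W0: "W0 \<in> L" "length W0 = n1 + length u0" "take (length s) W0 = s" "drop n1 W0 = u0"
    using N0[rule_format, OF g0] by blast
  obtain W1 where W1: "W1 \<in> L" "length W1 = n1 + length u1" "take (length s) W1 = s" "drop n1 W1 = u1"
    using N1[rule_format, OF g1] by blast
  obtain M0 where M0: "\<forall>n\<ge>M0. \<exists>W\<in>L. length W = n + length s \<and> take (length W0) W = W0 \<and> drop n W = s"
    using mix[OF W0(1) s_in] by blast
  obtain M1 where M1: "\<forall>n\<ge>M1. \<exists>W\<in>L. length W = n + length s \<and> take (length W1) W = W1 \<and> drop n W = s"
    using mix[OF W1(1) s_in] by blast
  define p where "p = max (max M0 M1) (n1 + length u0)"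
  have h0: "p \<ge> M0" and h1: "p \<ge> M1" unfolding p_def by auto
  obtain B0 where B0: "B0 \<in> L" "length B0 = p + length s" "take (length W0) B0 = W0" "drop p B0 = s"
    using M0[rule_format, OF h0] by blast
  obtain B1 where B1: "B1 \<in> L" "length B1 = p + length s" "take (length W1) B1 = W1" "drop p B1 = s"
    using M1[rule_format, OF h1] by blast
  have sp: "length s < n1" unfolding n1_def by simp
  have "take (length s) B0 = take (length s) (take (length W0) B0)"
    using W0(2) sp by simp
  then have "take (length s) B0 = s" using B0(3) W0(3) by simp
  moreover have "take (length s) B1 = take (length s) (take (length W1) B1)"
    using W1(2) sp by simp
  then have "take (length s) B1 = s" using B1(3) W1(3) by simp
  moreover have "drop n1 (take (n1 + length u0) B0) = u0" using B0(3) W0 by simp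
  moreover have "drop n1 (take (n1 + length u1) B1) = u1" using B1(3) W1 by simp
  moreover have "0 < p" "length s \<le> p" using sp unfolding p_def by auto
  ultimately show ?thesis using B0 B1
    by (intro exI[of _ B0] exI[of _ B1] exI[of _ p] exI[of _ n1]) simp
qed

lemma connector_exist:
  assumes w: "w \<in> L" and p: "0 < p"
  shows "\<exists>D M q off. 1 \<le> M \<and> D \<in> L \<and> length D = M * p + length s \<and> take (length s) D = s \<and>
     drop (M * p) D = s \<and> drop off (take (off + length w) D) = w \<and> q * int p + int off = c"
proof -
  obtain N where N: "\<forall>n\<ge>N. \<exists>W\<in>L. length W = n + length w \<and> take (length s) W = s \<and> drop n W = w"
    using mix[OF s_in w] by blast
  define n where "n = (N + length s) * p + nat (c mod int p)"
  have nN: "n \<ge> N + length s"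
  proof -
    have "(N + length s) * 1 \<le> (N + length s) * p" using p by (intro mult_le_mono2) simp
    then show ?thesis unfolding n_def by (simp add: trans_le_add1)
  qed
  obtain W where W: "W \<in> L" "length W = n + length w" "take (length s) W = s" "drop n W = w"
    using N[rule_format, of n] nN by (meson add_leD1)
  obtain K where K: "\<forall>n\<ge>K. \<exists>V\<in>L. length V = n + length s \<and> take (length W) V = W \<and> drop n V = s"
    using mix[OF W(1) s_in] by blast
  define M where "M = K + n + length w + 1"
  have Mp: "M \<le> M * p" using p by simp
  have MK: "M * p \<ge> K" "M * p \<ge> length W" using Mp W(2) unfolding M_def by linarith+
  obtain D where D: "D \<in> L" "length D = M * p + length s" "take (length W) D = W" "drop (M * p) D = s"
    using K[rule_format, OF MK(1)] by blast
  have "length s \<le> length W" using W(2) nN by linarith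
  then have "take (length s) D = s" using D(3) W(3) by (metis min.absorb1 take_take)
  moreover have "drop n (take (n + length w) D) = w" using D(3) W by simp
  moreover have "((c - int n) div int p) * int p + int n = c"
  proof -
    have "c mod int p \<ge> 0" using p by simp
    then have "int n = int ((N + length s) * p) + c mod int p" unfolding n_def by simp
    moreover have "c = int p * (c div int p) + c mod int p" by simp
    ultimately have e: "c - int n = int p * (c div int p - int (N + length s))"
      by (simp add: algebra_simps)
    have d: "(c - int n) div int p = c div int p - int (N + length s)" unfolding e using p by simp
    show ?thesis unfolding d using e by (metis add.commute diff_add_cancel mult.commute)
  qed
  moreover have "1 \<le> M" unfolding M_def by simp
  ultimately show ?thesis using D W(2)
    by (intro exI[of _ D] exI[of _ M] exI[of _ "(c - int n) div int p"] exI[of _ n]) simp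
qed

end

locale blk = lang +
  fixes B0 B1 :: "'a list" and p :: nat and off :: nat and u0 u1 :: "'a list"
  assumes p_pos: "0 < p" and sp: "length s \<le> p"
  and B0L: "B0 \<in> L" and B1L: "B1 \<in> L"
  and lenB0: "length B0 = p + length s" and lenB1: "length B1 = p + length s"
  and tB0: "take (length s) B0 = s" and tB1: "take (length s) B1 = s"
  and dB0: "drop p B0 = s" and dB1: "drop p B1 = s"
  and uB0: "drop off (take (off + length u0) B0) = u0"
  and uB1: "drop off (take (off + length u1) B1) = u1"
  and lenu: "length u0 = length u1"
begin

definition blkw :: "bool \<Rightarrow> 'a list" where "blkw b = (if b then B1 else B0)"

definition Dok :: "nat \<Rightarrow> 'a list \<Rightarrow> bool" where
  "Dok M D \<longleftrightarrow> 1 \<le> M \<and> D \<in> L \<and> length D = M * p + length s \<and> take (length s) D = s \<and> drop (M * p) D = s"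

definition pt :: "int \<Rightarrow> nat \<Rightarrow> 'a list \<Rightarrow> (int \<Rightarrow> bool) \<Rightarrow> int \<Rightarrow> 'a" where
  "pt q M D c n = (let j = n div int p in
     if j < q then B0 ! nat (n mod int p)
     else if j < q + int M then D ! nat (n - q * int p)
     else blkw (c j) ! nat (n mod int p))"

lemma blkw_L: "blkw b \<in> L" and blkw_len: "length (blkw b) = p + length s"
  and blkw_t: "take (length s) (blkw b) = s" and blkw_d: "drop p (blkw b) = s"
  by (auto simp: blkw_def B0L B1L lenB0 lenB1 tB0 tB1 dB0 dB1)

lemma take_nth_s: "take (length s) w = s \<Longrightarrow> r < length s \<Longrightarrow> w ! r = s ! r"
  by (metis nth_take)

lemma drop_nth_s: "drop m w = s \<Longrightarrow> r < length s \<Longrightarrow> w ! (m + r) = s ! r"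
proof -
  assume a: "drop m w = s" "r < length s"
  then have "r < length (drop m w)" by simp
  then have "m + r < length w" by simp
  then have "w ! (m + r) = drop m w ! r" by simp
  then show ?thesis using a by simp
qed

lemma divmod_p: "r < p \<Longrightarrow> (j * int p + int r) div int p = j \<and> (j * int p + int r) mod int p = int r"
  using p_pos by simp

lemma pt_at:
  assumes "r < p"
  shows "pt q M D c (j * int p + int r) =
    (if j < q then B0 ! r else if j < q + int M then D ! nat ((j - q) * int p + int r) else blkw (c j) ! r)"
proof -
  have e: "j * int p + int r - q * int p = (j - q) * int p + int r" by (simp add: algebra_simps)
  have d: "(j * int p + int r) div int p = j" and m: "(j * int p + int r) mod int p = int r"
    using divmod_p[OF assms, of j] by auto
  show ?thesis unfolding pt_def Let_def d m e by simp
qed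

lemma pt_at': "r < p \<Longrightarrow> j < q \<Longrightarrow> pt q M D c (j * int p + int r) = B0 ! r"
  "r < p \<Longrightarrow> q \<le> j \<Longrightarrow> j < q + int M \<Longrightarrow> pt q M D c (j * int p + int r) = D ! nat ((j - q) * int p + int r)"
  "r < p \<Longrightarrow> q + int M \<le> j \<Longrightarrow> pt q M D c (j * int p + int r) = blkw (c j) ! r"
  by (auto simp: pt_at)

lemma win_B0:
  assumes D: "Dok M D" and j: "j < q"
  shows "win (pt q M D c) (j * int p) (p + length s) = B0"
proof (rule win_eqI)
  show "length B0 = p + length s" by (rule lenB0)
  fix i assume i: "i < p + length s"
  show "pt q M D c (j * int p + int i) = B0 ! i"
  proof (cases "i < p")
    case True then show ?thesis using pt_at'(1)[OF True j] by simp
  next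
    case False
    define r where "r = i - p"
    have r: "r < length s" "i = p + r" using i False unfolding r_def by auto
    have rp: "r < p" using r sp by simp
    have e: "j * int p + int i = (j + 1) * int p + int r" using r by (simp add: algebra_simps)
    have "pt q M D c ((j + 1) * int p + int r) = s ! r"
    proof (cases "j + 1 < q")
      case True then show ?thesis using pt_at'(1)[OF rp True] take_nth_s[OF tB0 r(1)] by simp
    next
      case False
      then have jq: "j + 1 = q" using j by simp
      have "1 \<le> M" using D unfolding Dok_def by simp
      then have "q \<le> j + 1" "j + 1 < q + int M" using jq by auto
      then have "pt q M D c ((j + 1) * int p + int r) = D ! nat ((j + 1 - q) * int p + int r)"
        using pt_at'(2)[OF rp] by blast
      then show ?thesis using jq take_nth_s[of D r] D r(1) unfolding Dok_def by simp
    qed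
    then have "pt q M D c (j * int p + int i) = s ! r" by (subst e)
    then show ?thesis using r drop_nth_s[OF dB0 r(1)] by simp
  qed
qed

lemma win_D:
  assumes D: "Dok M D"
  shows "win (pt q M D c) (q * int p) (M * p + length s) = D"
proof (rule win_eqI)
  show "length D = M * p + length s" using D by (simp add: Dok_def)
  fix i assume i: "i < M * p + length s"
  show "pt q M D c (q * int p + int i) = D ! i"
  proof (cases "i < M * p")
    case True
    define a where "a = i div p"
    define r where "r = i mod p"
    have ar: "i = a * p + r" "r < p" "a < M" using True p_pos unfolding a_def r_def
      by (auto simp: less_mult_imp_div_less)
    have e: "q * int p + int i = (q + int a) * int p + int r" using ar by (simp add: algebra_simps)
    have "nat ((q + int a - q) * int p + int r) = i" using ar by (simp add: nat_add_distrib nat_mult_distrib)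
    then show ?thesis unfolding e using pt_at'(2)[OF ar(2), of q "q + int a" M D c] ar by simp
  next
    case False
    define r where "r = i - M * p"
    have r: "r < length s" "i = M * p + r" using i False unfolding r_def by auto
    have rp: "r < p" using r sp by simp
    have e: "q * int p + int i = (q + int M) * int p + int r" using r by (simp add: algebra_simps)
    have "pt q M D c ((q + int M) * int p + int r) = s ! r"
      using pt_at'(3)[OF rp, of q M "q + int M" D c] take_nth_s[OF blkw_t r(1)] by simp
    then show ?thesis unfolding e using r drop_nth_s[of "M*p" D r] D unfolding Dok_def by simp
  qed
qed

lemma win_blk:
  assumes D: "Dok M D" and j: "q + int M \<le> j"
  shows "win (pt q M D c) (j * int p) (p + length s) = blkw (c j)"
proof (rule win_eqI)
  show "length (blkw (c j)) = p + length s" by (rule blkw_len)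
  fix i assume i: "i < p + length s"
  show "pt q M D c (j * int p + int i) = blkw (c j) ! i"
  proof (cases "i < p")
    case True then show ?thesis using pt_at'(3)[OF True j] by simp
  next
    case False
    define r where "r = i - p"
    have r: "r < length s" "i = p + r" using i False unfolding r_def by auto
    have rp: "r < p" using r sp by simp
    have e: "j * int p + int i = (j + 1) * int p + int r" using r by (simp add: algebra_simps)
    have "pt q M D c ((j + 1) * int p + int r) = s ! r"
      using pt_at'(3)[OF rp, of q M "j+1" D c] j take_nth_s[OF blkw_t r(1)] by simp
    then have "pt q M D c (j * int p + int i) = s ! r" by (subst e)
    then show ?thesis using r drop_nth_s[OF blkw_d r(1)] by simp
  qed
qed

lemma good_pt:
  assumes D: "Dok M D"
  shows "good (pt q M D c)"
proof -
  define f where "f k = (if k \<le> 0 then (k + q) * int p else (k + q + int M - 1) * int p)" for k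
  have M1: "1 \<le> M" using D by (simp add: Dok_def)
  have mono: "strict_mono f"
  proof (rule int_strict_mono_step)
    fix k :: int
    show "f k < f (k + 1)" using p_pos M1 unfolding f_def by (auto simp: algebra_simps)
  qed
  have segL: "win (pt q M D c) (f k) (nat (f (k + 1) - f k) + length s) \<in> L" for k
  proof (cases "k < 0")
    case True
    then have "f k = (k + q) * int p" "nat (f (k + 1) - f k) = p" unfolding f_def
      by (auto simp: algebra_simps)
    then show ?thesis using win_B0[OF D, of "k+q" q c] True B0L by simp
  next
    case False
    show ?thesis
    proof (cases "k = 0")
      case True
      then have "f k = q * int p" "nat (f (k + 1) - f k) = M * p" unfolding f_def
        by (auto simp: algebra_simps nat_mult_distrib)
      then show ?thesis using win_D[OF D, of q c] D by (simp add: Dok_def)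
    next
      case False2: False
      then have "f k = (k + q + int M - 1) * int p" "nat (f (k + 1) - f k) = p" using False unfolding f_def
        by (auto simp: algebra_simps)
      then show ?thesis using win_blk[OF D, of q "k + q + int M - 1" c] False False2 blkw_L by simp
    qed
  qed
  have segs: "win (pt q M D c) (f k) (length s) = s" for k
  proof -
    have "win (pt q M D c) (f k) (length s) = take (length s) (win (pt q M D c) (f k) (nat (f (k + 1) - f k) + length s))"
      using win_sub[of 0 "length s" "nat (f (k + 1) - f k) + length s" "pt q M D c" "f k"] by simp
    also have "\<dots> = s"
    proof (cases "k < 0")
      case True
      then have "f k = (k + q) * int p" "nat (f (k + 1) - f k) = p" unfolding f_def
        by (auto simp: algebra_simps)
      then show ?thesis using win_B0[OF D, of "k+q" q c] True tB0 by simp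
    next
      case False
      show ?thesis
      proof (cases "k = 0")
        case True
        then have "f k = q * int p" "nat (f (k + 1) - f k) = M * p" unfolding f_def
          by (auto simp: algebra_simps nat_mult_distrib)
        then show ?thesis using win_D[OF D, of q c] D by (simp add: Dok_def)
      next
        case False2: False
        then have "f k = (k + q + int M - 1) * int p" "nat (f (k + 1) - f k) = p" using False unfolding f_def
          by (auto simp: algebra_simps)
        then show ?thesis using win_blk[OF D, of q "k + q + int M - 1" c] False False2 blkw_t by simp
      qed
    qed
    finally show ?thesis .
  qed
  show ?thesis by (rule good_seg[OF mono segL segs])
qed

lemma pt_shift:
  "(\<lambda>i. pt q M D c (i + int t * int p)) = pt (q - int t) M D (\<lambda>j. c (j + int t))"
proof
  fix i
  have d: "(i + int t * int p) div int p = i div int p + int t" using p_pos by simp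
  have m: "(i + int t * int p) mod int p = i mod int p" by simp
  have e: "i + int t * int p - q * int p = i - (q - int t) * int p" by (simp add: algebra_simps)
  show "pt q M D c (i + int t * int p) = pt (q - int t) M D (\<lambda>j. c (j + int t)) i"
    unfolding pt_def Let_def d m e by auto
qed

end

definition ctype :: "nat \<Rightarrow> (nat \<Rightarrow> bool) \<Rightarrow> int \<Rightarrow> bool" where
  "ctype n \<eta> j = (\<exists>k. j + int n = 2 ^ k \<and> \<eta> (fst (prod_decode k)))"

lemma ctype_shift: "ctype n \<eta> (j + int t) = ctype (n + t) \<eta> j"
  unfolding ctype_def by (simp add: algebra_simps)

lemma pow2_inj_int: "(2::int) ^ k = 2 ^ k' \<Longrightarrow> k = k'"
  by (simp add: power_inject_exp)

lemma ctype_at: "ctype n \<eta> (2 ^ k - int n) = \<eta> (fst (prod_decode k))"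
  unfolding ctype_def by (auto dest: pow2_inj_int)

lemma not_pow2:
  fixes d :: int
  assumes "d \<noteq> 0" "2 * \<bar>d\<bar> < 2 ^ k"
  shows "\<not> (\<exists>k'. 2 ^ k + d = (2::int) ^ k')"
proof
  assume "\<exists>k'. 2 ^ k + d = (2::int) ^ k'"
  then obtain k' where k': "2 ^ k + d = (2::int) ^ k'" by blast
  have k0: "k > 0" using assms by (cases k) auto
  show False
  proof (cases k' k rule: linorder_cases)
    case less
    then have "(2::int) ^ k' \<le> 2 ^ (k - 1)" by (intro power_increasing) auto
    moreover have "(2::int) ^ k = 2 * 2 ^ (k - 1)" using k0 by (cases k) simp_all
    ultimately show False using k' assms by linarith
  next
    case equal then show False using k' assms by simp
  next
    case greater
    then have "(2::int) ^ (k + 1) \<le> 2 ^ k'" by (intro power_increasing) auto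
    then show False using k' assms by simp
  qed
qed

lemma ctype_agree:
  assumes "\<And>i. i \<le> B \<Longrightarrow> \<eta> i = \<eta>' i" "j + int n \<le> int B"
  shows "ctype n \<eta> j = ctype n \<eta>' j"
proof -
  have "\<eta> (fst (prod_decode k)) = \<eta>' (fst (prod_decode k))" if "j + int n = 2 ^ k" for k
  proof -
    have "int k < int (2 ^ k)" using less_exp[of k] by linarith
    then have "int k < 2 ^ k" by simp
    then have "k \<le> B" using that assms(2) by linarith
    moreover have "fst (prod_decode k) \<le> k"
      using le_prod_encode_1[of "fst (prod_decode k)" "snd (prod_decode k)"] by simp
    ultimately show ?thesis using assms(1) by simp
  qed
  then show ?thesis unfolding ctype_def by blast
qed

definition code :: "nat \<Rightarrow> (nat \<Rightarrow> bool) \<Rightarrow> nat \<Rightarrow> bool" where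
  "code m \<omega> i = (if i \<le> m then True else if i = Suc m then False else \<omega> (i - m - 2))"

lemma code0: "code m \<omega> 0"
  by (simp add: code_def)

lemma code_inj: "code m \<omega> = code m' \<omega>' \<Longrightarrow> m = m' \<and> \<omega> = \<omega>'"
proof -
  assume e: "code m \<omega> = code m' \<omega>'"
  have "m = m'"
  proof (rule ccontr)
    assume "m \<noteq> m'"
    then consider "m < m'" | "m' < m" by linarith
    then show False
    proof cases
      case 1 then show False using fun_cong[OF e, of "Suc m"] by (simp add: code_def)
    next
      case 2 then show False using fun_cong[OF e, of "Suc m'"] by (simp add: code_def)
    qed
  qed
  moreover have "\<omega> = \<omega>'"
  proof
    fix i show "\<omega> i = \<omega>' i" using fun_cong[OF e, of "i + m + 2"] \<open>m = m'\<close> by (simp add: code_def)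
  qed
  ultimately show ?thesis by simp
qed

lemma code_agree: "(\<And>i. i < K \<Longrightarrow> \<omega> i = \<omega>' i) \<Longrightarrow> i \<le> K \<Longrightarrow> code m \<omega> i = code m \<omega>' i"
  by (simp add: code_def)

lemma pow2_gap:
  assumes "k < k'"
  shows "(2::int) ^ k \<le> 2 ^ k' - 2 ^ k"
proof -
  have "(2::int) ^ (k + 1) \<le> 2 ^ k'" using assms by (intro power_increasing) auto
  then show ?thesis by simp
qed

lemma same_family_contra:
  fixes a :: int and R W p T1 :: nat and t t' :: nat
  assumes p: "0 < p" and W: "2 * R < W"
  and T1: "int T1 \<ge> int R + \<bar>a\<bar> + int ((2 * W + 2 * R + 1) * p)"
  and t: "T1 \<le> t" and tt: "t + W \<le> t'" "t' \<le> t + 2 * W"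
  and k: "\<bar>int t - (2 ^ k * int p - a)\<bar> \<le> int R"
  and k': "\<bar>int t' - (2 ^ k' * int p - a)\<bar> \<le> int R"
  shows False
proof (cases k k' rule: linorder_cases)
  case equal
  then show False using k k'[folded equal] tt W by linarith
next
  case less
  have big: "(2::int) ^ k * int p \<ge> int ((2 * W + 2 * R + 1) * p)" using k t T1 by linarith
  then have "int (2 * W + 2 * R + 1) * int p \<le> 2 ^ k * int p" by (simp add: algebra_simps)
  then have "(2::int) ^ k \<ge> int (2 * W + 2 * R + 1)" using p by (simp add: mult_le_cancel_right)
  moreover have "(2::int) ^ k \<le> 2 ^ k' - 2 ^ k" by (rule pow2_gap[OF less])
  ultimately have "int (2 * W + 2 * R + 1) * int p \<le> (2 ^ k' - 2 ^ k) * int p"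
    using p by (intro mult_right_mono) auto
  moreover have "int (2 * W + 2 * R + 1) \<le> int (2 * W + 2 * R + 1) * int p" using p by simp
  ultimately show False using k k' tt by (simp add: algebra_simps)
next
  case greater
  have big: "(2::int) ^ k' * int p \<ge> int ((2 * W + 2 * R + 1) * p)" using k' tt t T1 by linarith
  then have "int (2 * W + 2 * R + 1) * int p \<le> 2 ^ k' * int p" by (simp add: algebra_simps)
  then have "(2::int) ^ k' \<ge> int (2 * W + 2 * R + 1)" using p by (simp add: mult_le_cancel_right)
  moreover have "(2::int) ^ k' \<le> 2 ^ k - 2 ^ k'" by (rule pow2_gap[OF greater])
  ultimately have "int (2 * W + 2 * R + 1) * int p \<le> (2 ^ k - 2 ^ k') * int p"
    using p by (intro mult_right_mono) auto
  moreover have "int (2 * W + 2 * R + 1) \<le> int (2 * W + 2 * R + 1) * int p" using p by simp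
  ultimately show False using k k' tt by (simp add: algebra_simps)
qed

lemma synd_sparse:
  fixes P :: "nat \<Rightarrow> bool" and a b Tlow :: int and R p :: nat
  assumes p: "0 < p"
  and far: "\<And>t. \<not> P t \<Longrightarrow> int t < Tlow \<or> (\<exists>k. \<bar>int t - (2 ^ k * int p - a)\<bar> \<le> int R)
                 \<or> (\<exists>k. \<bar>int t - (2 ^ k * int p - b)\<bar> \<le> int R)"
  shows "syndetic {t. P t}"
  unfolding syndetic_def
proof (intro allI impI)
  fix A :: "nat set"
  assume thick: "\<forall>L. \<exists>a. {a..<a + L} \<subseteq> A"
  define W where "W = 2 * R + 1"
  define T1 where "T1 = nat (max Tlow 0) + R + nat \<bar>a\<bar> + nat \<bar>b\<bar> + (2 * W + 2 * R + 1) * p"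
  obtain a0 where a0: "{a0..<a0 + (T1 + 2 * W + 1)} \<subseteq> A" using thick by blast
  define t0 where "t0 = a0 + T1"
  have inA: "t0 \<in> A" "t0 + W \<in> A" "t0 + 2 * W \<in> A" using a0 unfolding t0_def by auto
  have WR: "2 * R < W" unfolding W_def by simp
  have Ta: "int T1 \<ge> int R + \<bar>a\<bar> + int ((2 * W + 2 * R + 1) * p)" unfolding T1_def by simp
  have Tb: "int T1 \<ge> int R + \<bar>b\<bar> + int ((2 * W + 2 * R + 1) * p)" unfolding T1_def by simp
  have "nat (max Tlow 0) \<le> T1" unfolding T1_def by simp
  then have "int (nat (max Tlow 0)) \<le> int T1" by (rule of_nat_mono)
  moreover have "int (nat (max Tlow 0)) = max Tlow 0" by simp
  ultimately have Tlow: "Tlow \<le> int T1" by linarith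
  have t0T: "T1 \<le> t0" "T1 \<le> t0 + W" unfolding t0_def by auto
  show "{t. P t} \<inter> A \<noteq> {}"
  proof (rule ccontr)
    assume "\<not> {t. P t} \<inter> A \<noteq> {}"
    then have np: "\<not> P t0" "\<not> P (t0 + W)" "\<not> P (t0 + 2 * W)" using inA by auto
    have f: "(\<exists>k. \<bar>int t - (2 ^ k * int p - a)\<bar> \<le> int R) \<or> (\<exists>k. \<bar>int t - (2 ^ k * int p - b)\<bar> \<le> int R)"
      if "\<not> P t" "T1 \<le> t" for t
      using far[OF that(1)] that(2) Tlow unfolding t0_def by auto
    note f0 = f[OF np(1) t0T(1)] and f1 = f[OF np(2) t0T(2)]
    have f2: "(\<exists>k. \<bar>int (t0 + 2 * W) - (2 ^ k * int p - a)\<bar> \<le> int R) \<or> (\<exists>k. \<bar>int (t0 + 2 * W) - (2 ^ k * int p - b)\<bar> \<le> int R)" using f[OF np(3)] t0T by simp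
    define Q where "Q c t \<longleftrightarrow> (\<exists>k. \<bar>int t - (2 ^ k * int p - c)\<bar> \<le> int R)" for c t
    have C: "\<not> (Q c t \<and> Q c t')" if "int T1 \<ge> int R + \<bar>c\<bar> + int ((2 * W + 2 * R + 1) * p)"
      "T1 \<le> t" "t + W \<le> t'" "t' \<le> t + 2 * W" for c t t'
      using same_family_contra[OF p WR that] unfolding Q_def by blast
    have "\<not> (Q a t0 \<and> Q a (t0 + W))" "\<not> (Q a t0 \<and> Q a (t0 + 2 * W))" "\<not> (Q a (t0 + W) \<and> Q a (t0 + 2 * W))"
      "\<not> (Q b t0 \<and> Q b (t0 + W))" "\<not> (Q b t0 \<and> Q b (t0 + 2 * W))" "\<not> (Q b (t0 + W) \<and> Q b (t0 + 2 * W))"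
      by (rule C; use Ta Tb t0T in simp)+
    moreover have "Q a t0 \<or> Q b t0" "Q a (t0 + W) \<or> Q b (t0 + W)" "Q a (t0 + 2 * W) \<or> Q b (t0 + 2 * W)"
      using f0 f1 f2 unfolding Q_def by auto
    ultimately show False by blast
  qed
qed

lemma syndetic_mono: "S \<subseteq> S' \<Longrightarrow> syndetic S \<Longrightarrow> syndetic S'"
  unfolding syndetic_def by blast

locale sys = blk +
  fixes E :: "(int \<Rightarrow> 'a) \<Rightarrow> 'b::metric_space" and Y :: "'b set" and g :: "'b \<Rightarrow> 'b"
    and \<epsilon> :: real and c0 :: int
  assumes E1: "good z \<Longrightarrow> E z \<in> Y"
  and E2: "good z \<Longrightarrow> E (\<lambda>i. z (i + int t)) = (g ^^ t) (E z)"
  and E3: "\<eta> > 0 \<Longrightarrow> \<exists>N. \<forall>z z'. good z \<and> good z' \<and> (\<forall>i. - int N \<le> i \<and> i \<le> int N \<longrightarrow> z i = z' i)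
             \<longrightarrow> dist (E z) (E z') < \<eta>"
  and eps: "\<epsilon> > 0"
  and E4: "good z \<Longrightarrow> good z' \<Longrightarrow> win z c0 (length u0) = u0 \<Longrightarrow> win z' c0 (length u1) = u1
             \<Longrightarrow> \<epsilon> \<le> dist (E z) (E z')"
  and offb: "off + length u0 \<le> p + length s"
begin

lemma good_shift: "good z \<Longrightarrow> good (\<lambda>i. z (i + int t))"
proof -
  assume g: "good z"
  have "win (\<lambda>i. z (i + int t)) i n = win z (i + int t) n" for i n
    unfolding win_def by (simp add: algebra_simps)
  then show ?thesis using g unfolding good_def by simp
qed

lemma pt_eq:
  assumes "q + int M \<le> i div int p" "q' + int M' \<le> i div int p" "c (i div int p) = c' (i div int p)"
  shows "pt q M D c i = pt q' M' D' c' i"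
  using assms unfolding pt_def Let_def by auto

lemma sprox:
  fixes q q' :: int and n n' :: nat and \<eta> \<eta>' :: "nat \<Rightarrow> bool"
  assumes D: "Dok M D" and D': "Dok M' D'"
  defines "z \<equiv> pt q M D (ctype n \<eta>)" and "z' \<equiv> pt q' M' D' (ctype n' \<eta>')"
  shows "(E z, E z') \<in> SProx g"
  unfolding SProx_def
proof (clarsimp)
  fix e :: real assume e: "0 < e"
  obtain N where N: "\<forall>z z'. good z \<and> good z' \<and> (\<forall>i. - int N \<le> i \<and> i \<le> int N \<longrightarrow> z i = z' i)
             \<longrightarrow> dist (E z) (E z') < e" using E3[OF e] by blast
  have gz: "good z" "good z'" unfolding z_def z'_def using good_pt D D' by auto
  define P where "P t \<longleftrightarrow> (\<forall>i. - int N \<le> i \<and> i \<le> int N \<longrightarrow> z (i + int t) = z' (i + int t))" for t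
  have sub: "{t. P t} \<subseteq> {t. dist ((g ^^ t) (E z)) ((g ^^ t) (E z')) < e}"
  proof
    fix t assume "t \<in> {t. P t}"
    then have "dist (E (\<lambda>i. z (i + int t))) (E (\<lambda>i. z' (i + int t))) < e"
      using N good_shift gz unfolding P_def by blast
    then show "t \<in> {t. dist ((g ^^ t) (E z)) ((g ^^ t) (E z')) < e}" using E2 gz by simp
  qed
  define Jm where "Jm = max (q + int M) (q' + int M')"
  have "syndetic {t. P t}"
  proof (rule synd_sparse[OF p_pos, where Tlow = "(Jm + 1) * int p + int N" and a = "int n * int p" and b = "int n' * int p" and R = "N + p"])
    fix t assume "\<not> P t"
    then obtain i where i: "- int N \<le> i" "i \<le> int N" "z (i + int t) \<noteq> z' (i + int t)"
      unfolding P_def by blast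
    define m where "m = i + int t"
    define j where "j = m div int p"
    have dm: "j * int p + m mod int p = m" unfolding j_def by (rule div_mult_mod_eq)
    have "0 \<le> m mod int p" "m mod int p < int p" using p_pos by simp_all
    then have jm: "j * int p \<le> m" "m < j * int p + int p" using dm by linarith+
    have "\<not> (q + int M \<le> j \<and> q' + int M' \<le> j \<and> ctype n \<eta> j = ctype n' \<eta>' j)"
      using pt_eq[of q M m q' M' "ctype n \<eta>" "ctype n' \<eta>'" D D'] i(3)
      unfolding z_def z'_def m_def j_def by blast
    then consider (a) "j < Jm" | (b) "ctype n \<eta> j" | (c) "ctype n' \<eta>' j"
      unfolding Jm_def by fastforce
    then show "int t < (Jm + 1) * int p + int N \<or>
          (\<exists>k. \<bar>int t - (2 ^ k * int p - int n * int p)\<bar> \<le> int (N + p)) \<or>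
          (\<exists>k. \<bar>int t - (2 ^ k * int p - int n' * int p)\<bar> \<le> int (N + p))"
    proof cases
      case a
      then have "(j + 1) * int p \<le> Jm * int p" using p_pos by (intro mult_right_mono) auto
      then have "m < Jm * int p" using jm by (simp add: algebra_simps)
      then show ?thesis using i unfolding m_def by (simp add: algebra_simps)
    next
      case b
      then obtain k where "j + int n = 2 ^ k" unfolding ctype_def by blast
      then have "2 ^ k * int p - int n * int p = j * int p" by (simp add: algebra_simps flip: \<open>j + int n = 2 ^ k\<close>)
      then have "\<bar>int t - (2 ^ k * int p - int n * int p)\<bar> \<le> int (N + p)"
        using jm i unfolding m_def by auto
      then show ?thesis by blast
    next
      case c
      then obtain k where "j + int n' = 2 ^ k" unfolding ctype_def by blast
      then have "2 ^ k * int p - int n' * int p = j * int p" by (simp add: algebra_simps flip: \<open>j + int n' = 2 ^ k\<close>)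
      then have "\<bar>int t - (2 ^ k * int p - int n' * int p)\<bar> \<le> int (N + p)"
        using jm i unfolding m_def by auto
      then show ?thesis by blast
    qed
  qed
  then show "syndetic {t. dist ((g ^^ t) (E z)) ((g ^^ t) (E z')) < e}"
    using syndetic_mono[OF sub] by blast
qed

end

context sys
begin

lemma diff_block:
  fixes n n' :: nat and \<eta> \<eta>' :: "nat \<Rightarrow> bool" and J :: int
  assumes h0: "\<eta> 0" and h0': "\<eta>' 0" and ne: "n \<noteq> n' \<or> \<eta> \<noteq> \<eta>'"
  shows "\<exists>j\<ge>J. ctype n \<eta> j \<noteq> ctype n' \<eta>' j"
proof -
  have grow: "int r < 2 ^ (prod_encode (i, r))" for i r
  proof -
    have "r \<le> prod_encode (i, r)" by (rule le_prod_encode_2)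
    moreover have "prod_encode (i, r) < 2 ^ prod_encode (i, r)" by (rule less_exp)
    ultimately have "int r < int (2 ^ prod_encode (i, r))" by linarith
    then show ?thesis by simp
  qed
  show ?thesis
  proof (cases "n = n'")
    case False
    define d where "d = int n' - int n"
    define r where "r = nat (\<bar>J\<bar> + int n + 2 * \<bar>d\<bar>)"
    define k where "k = prod_encode (0, r)"
    define j where "j = 2 ^ k - int n"
    have kb: "int r < 2 ^ k" unfolding k_def by (rule grow)
    have "ctype n \<eta> j" unfolding j_def ctype_at k_def using h0 by simp
    moreover have "\<not> ctype n' \<eta>' j"
    proof -
      have "d \<noteq> 0" "2 * \<bar>d\<bar> < 2 ^ k" using False kb unfolding d_def r_def by auto
      from not_pow2[OF this] have "\<not> (\<exists>k'. j + int n' = 2 ^ k')" unfolding j_def d_def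
        by (simp add: algebra_simps)
      then show ?thesis unfolding ctype_def by blast
    qed
    moreover have "J \<le> j" using kb unfolding j_def r_def by linarith
    ultimately show ?thesis by blast
  next
    case True
    then have "\<eta> \<noteq> \<eta>'" using ne by simp
    then obtain i where i: "\<eta> i \<noteq> \<eta>' i" by blast
    define r where "r = nat (\<bar>J\<bar> + int n)"
    define k where "k = prod_encode (i, r)"
    define j where "j = 2 ^ k - int n"
    have kb: "int r < 2 ^ k" unfolding k_def by (rule grow)
    have "ctype n \<eta> j = \<eta> i" "ctype n' \<eta>' j = \<eta>' i" unfolding j_def k_def using True ctype_at by simp_all
    moreover have "J \<le> j" using kb unfolding j_def r_def by linarith
    ultimately show ?thesis using i by metis
  qed
qed

lemma win_shift: "win (\<lambda>i. z (i + int t)) c n = win z (c + int t) n"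
  unfolding win_def by (simp add: algebra_simps)

lemma u_in_block:
  assumes D: "Dok M D" and j: "q + int M \<le> j"
  shows "win (pt q M D c) (j * int p + int off) (length u0) = (if c j then u1 else u0)"
proof -
  have "win (pt q M D c) (j * int p + int off) (length u0)
      = drop off (take (off + length u0) (win (pt q M D c) (j * int p) (p + length s)))"
    by (rule win_sub) (rule offb)
  also have "\<dots> = drop off (take (off + length u0) (blkw (c j)))" using win_blk[OF D j] by simp
  also have "\<dots> = (if c j then u1 else u0)" using uB0 uB1 lenu by (simp add: blkw_def)
  finally show ?thesis .
qed

lemma freq_sep:
  fixes q q' :: int and n n' :: nat and \<eta> \<eta>' :: "nat \<Rightarrow> bool"
  assumes D: "Dok M D" and D': "Dok M' D'"
  and h0: "\<eta> 0" and h0': "\<eta>' 0" and ne: "n \<noteq> n' \<or> \<eta> \<noteq> \<eta>'"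
  defines "z \<equiv> pt q M D (ctype n \<eta>)" and "z' \<equiv> pt q' M' D' (ctype n' \<eta>')"
  shows "\<exists>t\<ge>T. \<epsilon> \<le> dist ((g ^^ t) (E z)) ((g ^^ t) (E z'))"
proof -
  have gz: "good z" "good z'" unfolding z_def z'_def using good_pt D D' by auto
  define J where "J = max (max (q + int M) (q' + int M')) (\<bar>c0\<bar> + int T)"
  obtain j where j: "j \<ge> J" "ctype n \<eta> j \<noteq> ctype n' \<eta>' j" using diff_block[OF h0 h0' ne] by blast
  have j0: "0 \<le> j" using j(1) abs_ge_zero[of c0] unfolding J_def by linarith
  have "j * 1 \<le> j * int p" using p_pos j0 by (intro mult_left_mono) auto
  then have jp: "j \<le> j * int p" by simp
  define t where "t = nat (j * int p + int off - c0)"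
  have tt: "int t = j * int p + int off - c0" "T \<le> t" using j jp unfolding t_def J_def by auto
  have ct: "c0 + int t = j * int p + int off" using tt by simp
  have w1: "win (\<lambda>i. z (i + int t)) c0 (length u0) = (if ctype n \<eta> j then u1 else u0)"
    unfolding win_shift ct z_def using u_in_block[OF D] j unfolding J_def by simp
  have w2: "win (\<lambda>i. z' (i + int t)) c0 (length u0) = (if ctype n' \<eta>' j then u1 else u0)"
    unfolding win_shift ct z'_def using u_in_block[OF D'] j unfolding J_def by simp
  have gs: "good (\<lambda>i. z (i + int t))" "good (\<lambda>i. z' (i + int t))" using good_shift gz by auto
  have "\<epsilon> \<le> dist (E (\<lambda>i. z (i + int t))) (E (\<lambda>i. z' (i + int t)))"
  proof (cases "ctype n \<eta> j")
    case True
    then have "\<not> ctype n' \<eta>' j" using j by simp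
    then show ?thesis using E4[OF gs(2) gs(1)] w1 w2 True lenu by (simp add: dist_commute)
  next
    case False
    then have "ctype n' \<eta>' j" using j by simp
    then show ?thesis using E4[OF gs(1) gs(2)] w1 w2 False lenu by simp
  qed
  then have "\<epsilon> \<le> dist ((g ^^ t) (E z)) ((g ^^ t) (E z'))" using E2[OF gz(1), of t] E2[OF gz(2), of t] by simp
  then show ?thesis using tt(2) by blast
qed

lemma limsup_ge:
  fixes f :: "nat \<Rightarrow> real"
  assumes "\<And>T. \<exists>t\<ge>T. c \<le> f t"
  shows "ereal c \<le> limsup (\<lambda>t. ereal (f t))"
  unfolding limsup_INF_SUP
proof (rule INF_greatest)
  fix T :: nat assume "T \<in> UNIV"
  obtain t where "t \<ge> T" "c \<le> f t" using assms by blast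
  then show "ereal c \<le> (SUP m\<in>{T..}. ereal (f m))" by (intro SUP_upper2[of t]) auto
qed

lemma scr_pair:
  fixes q q' :: int and n n' :: nat and \<eta> \<eta>' :: "nat \<Rightarrow> bool"
  assumes D: "Dok M D" and D': "Dok M' D'"
  and h0: "\<eta> 0" and h0': "\<eta>' 0" and ne: "n \<noteq> n' \<or> \<eta> \<noteq> \<eta>'"
  defines "z \<equiv> pt q M D (ctype n \<eta>)" and "z' \<equiv> pt q' M' D' (ctype n' \<eta>')"
  shows "(E z, E z') \<in> SProx g - Asy g \<and> ereal \<epsilon> \<le> limsup (\<lambda>t. ereal (dist ((g ^^ t) (E z)) ((g ^^ t) (E z'))))
     \<and> E z \<noteq> E z'"
proof -
  have fs: "\<And>T. \<exists>t\<ge>T. \<epsilon> \<le> dist ((g ^^ t) (E z)) ((g ^^ t) (E z'))"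
    unfolding z_def z'_def by (rule freq_sep[OF D D' h0 h0' ne])
  have ls: "ereal \<epsilon> \<le> limsup (\<lambda>t. ereal (dist ((g ^^ t) (E z)) ((g ^^ t) (E z'))))"
    by (rule limsup_ge) (rule fs)
  have na: "(E z, E z') \<notin> Asy g"
  proof
    assume "(E z, E z') \<in> Asy g"
    then have "(\<lambda>t. dist ((g ^^ t) (E z)) ((g ^^ t) (E z'))) \<longlonglongrightarrow> 0" unfolding Asy_def by simp
    then have "(\<lambda>t. ereal (dist ((g ^^ t) (E z)) ((g ^^ t) (E z')))) \<longlonglongrightarrow> ereal 0" by (rule tendsto_ereal)
    then have "limsup (\<lambda>t. ereal (dist ((g ^^ t) (E z)) ((g ^^ t) (E z')))) = ereal 0"
      by (intro lim_imp_Limsup) auto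
    then show False using ls eps by simp
  qed
  have neq: "E z \<noteq> E z'"
  proof
    assume "E z = E z'"
    then show False using fs[of 0] eps by auto
  qed
  show ?thesis using sprox[OF D D'] na ls neq unfolding z_def z'_def by blast
qed

end

abbreviation PT :: "(nat \<Rightarrow> bool) topology" where
  "PT \<equiv> product_topology (\<lambda>_. discrete_topology UNIV) UNIV"

lemma topspace_PT: "topspace PT = UNIV"
  by (simp add: topspace_product_topology PiE_UNIV_domain)

lemma compact_PT: "compact_space PT"
  by (simp add: compact_space_product_topology compact_space_discrete_topology)

lemma openin_PT_cyl:
  assumes "\<And>\<omega>. \<omega> \<in> S \<Longrightarrow> \<exists>K. \<forall>\<omega>'. (\<forall>i<K. \<omega>' i = \<omega> i) \<longrightarrow> \<omega>' \<in> S"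
  shows "openin PT S"
  unfolding openin_product_topology_alt
proof (intro ballI)
  fix \<omega> assume w: "\<omega> \<in> S"
  obtain K where K: "\<forall>\<omega>'. (\<forall>i<K. \<omega>' i = \<omega> i) \<longrightarrow> \<omega>' \<in> S" using assms[OF w] by blast
  define U where "U i = (if i < K then {\<omega> i} else UNIV)" for i
  have "finite {i \<in> UNIV. U i \<noteq> topspace (discrete_topology UNIV)}"
    by (rule finite_subset[of _ "{..<K}"]) (auto simp: U_def)
  moreover have "\<omega> \<in> Pi\<^sub>E UNIV U" by (auto simp: U_def PiE_UNIV_domain)
  moreover have "Pi\<^sub>E UNIV U \<subseteq> S"
  proof
    fix \<omega>' assume "\<omega>' \<in> Pi\<^sub>E UNIV U"
    then have "\<forall>i<K. \<omega>' i = \<omega> i" unfolding U_def PiE_UNIV_domain Pi_def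
      by (metis (mono_tags, lifting) UNIV_I mem_Collect_eq singletonD)
    then show "\<omega>' \<in> S" using K by blast
  qed
  ultimately show "\<exists>U. finite {i \<in> UNIV. U i \<noteq> topspace (discrete_topology UNIV)} \<and>
             (\<forall>i\<in>UNIV. openin (discrete_topology UNIV) (U i)) \<and> \<omega> \<in> Pi\<^sub>E UNIV U \<and> Pi\<^sub>E UNIV U \<subseteq> S"
    by auto
qed

lemma cont_PT:
  fixes h :: "(nat \<Rightarrow> bool) \<Rightarrow> 'b::metric_space"
  assumes modu: "\<And>e. e > 0 \<Longrightarrow> \<exists>K. \<forall>\<omega> \<omega>'. (\<forall>i<K. \<omega> i = \<omega>' i) \<longrightarrow> dist (h \<omega>) (h \<omega>') < e"
  shows "continuous_map PT euclidean h"
  unfolding continuous_map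
proof (intro conjI allI impI)
  show "h ` topspace PT \<subseteq> topspace euclidean" by simp
  fix U :: "'b set" assume "openin euclidean U"
  then have U: "open U" by simp
  show "openin PT {x \<in> topspace PT. h x \<in> U}"
  proof (rule openin_PT_cyl)
    fix \<omega> assume "\<omega> \<in> {x \<in> topspace PT. h x \<in> U}"
    then have "h \<omega> \<in> U" by simp
    then obtain e where e: "e > 0" "ball (h \<omega>) e \<subseteq> U" using U open_contains_ball by blast
    obtain K where K: "\<forall>\<omega> \<omega>'. (\<forall>i<K. \<omega> i = \<omega>' i) \<longrightarrow> dist (h \<omega>) (h \<omega>') < e" using modu[OF e(1)] by blast
    show "\<exists>K. \<forall>\<omega>'. (\<forall>i<K. \<omega>' i = \<omega> i) \<longrightarrow> \<omega>' \<in> {x \<in> topspace PT. h x \<in> U}"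
    proof (intro exI allI impI)
      fix \<omega>' assume "\<forall>i<K. \<omega>' i = \<omega> i"
      then have "dist (h \<omega>) (h \<omega>') < e" using K by auto
      then show "\<omega>' \<in> {x \<in> topspace PT. h x \<in> U}" using e(2) topspace_PT by auto
    qed
  qed
qed

lemma compact_img_coord:
  fixes h :: "(nat \<Rightarrow> bool) \<Rightarrow> 'b::metric_space"
  assumes c: "continuous_map PT euclidean h"
  shows "compact (h ` {\<omega>. \<omega> i = b})" and "compact (range h)"
proof -
  have "openin PT (topspace PT - {\<omega>. \<omega> i = b})"
    unfolding topspace_PT by (rule openin_PT_cyl) (intro exI[of _ "Suc i"], auto)
  then have "closedin PT {\<omega>. \<omega> i = b}" unfolding closedin_def topspace_PT by simp
  then have "compactin PT {\<omega>. \<omega> i = b}" by (rule closedin_compact_space[OF compact_PT])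
  from image_compactin[OF this c] show "compact (h ` {\<omega>. \<omega> i = b})" by simp
  have "compactin PT UNIV" using compact_PT unfolding compact_space_def topspace_PT .
  from image_compactin[OF this c] show "compact (range h)" by simp
qed

lemma cantor_image:
  fixes h :: "(nat \<Rightarrow> bool) \<Rightarrow> 'b::metric_space"
  assumes inj: "inj h"
  and modu: "\<And>e. e > 0 \<Longrightarrow> \<exists>K. \<forall>\<omega> \<omega>'. (\<forall>i<K. \<omega> i = \<omega>' i) \<longrightarrow> dist (h \<omega>) (h \<omega>') < e"
  shows "cantor_set (range h)"
proof -
  have c: "continuous_map PT euclidean h" by (rule cont_PT[OF modu])
  have perf: "x islimpt range h" if "x \<in> range h" for x
    unfolding islimpt_approachable
  proof (intro allI impI)
    fix e :: real assume e: "0 < e"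
    obtain \<omega> where x: "x = h \<omega>" using \<open>x \<in> range h\<close> by blast
    obtain K where K: "\<forall>\<omega> \<omega>'. (\<forall>i<K. \<omega> i = \<omega>' i) \<longrightarrow> dist (h \<omega>) (h \<omega>') < e" using modu[OF e] by blast
    define \<omega>' where "\<omega>' = fun_upd \<omega> K (\<not> \<omega> K)"
    have "\<omega>' \<noteq> \<omega>" unfolding \<omega>'_def by (metis fun_upd_same)
    then have "h \<omega>' \<noteq> h \<omega>" using inj by (metis injD)
    moreover have "dist (h \<omega>') (h \<omega>) < e" using K unfolding \<omega>'_def by simp
    ultimately show "\<exists>x'\<in>range h. x' \<noteq> x \<and> dist x' x < e" unfolding x by blast
  qed
  have tot: "connected_component_set (range h) x = {x}" if "x \<in> range h" for x
  proof
    show "{x} \<subseteq> connected_component_set (range h) x" using connected_component_refl[OF that] by simp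
    show "connected_component_set (range h) x \<subseteq> {x}"
    proof
      fix y assume y: "y \<in> connected_component_set (range h) x"
      show "y \<in> {x}"
      proof (rule ccontr)
        assume "y \<notin> {x}"
        obtain \<omega> where x: "x = h \<omega>" using \<open>x \<in> range h\<close> by blast
        have "y \<in> range h" using y connected_component_subset by blast
        then obtain \<omega>y where yy: "y = h \<omega>y" by blast
        have "\<omega> \<noteq> \<omega>y" using \<open>y \<notin> {x}\<close> x yy by auto
        then obtain i where i: "\<omega> i \<noteq> \<omega>y i" by blast
        define A where "A = h ` {\<omega>'. \<omega>' i = \<omega> i}"
        define B where "B = h ` {\<omega>'. \<omega>' i = (\<not> \<omega> i)}"
        have cA: "closed A" "closed B" unfolding A_def B_def
          using compact_img_coord(1)[OF c] compact_imp_closed by blast+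
        let ?C = "connected_component_set (range h) x"
        have "?C \<subseteq> A \<union> B"
        proof
          fix v assume "v \<in> ?C"
          then have "v \<in> range h" using connected_component_subset by blast
          then obtain \<omega>v where "v = h \<omega>v" by blast
          then show "v \<in> A \<union> B" unfolding A_def B_def by (cases "\<omega>v i = \<omega> i") auto
        qed
        moreover have "A \<inter> B = {}" unfolding A_def B_def using inj by (auto dest: injD)
        moreover have "x \<in> A \<inter> ?C" unfolding A_def x using connected_component_refl[OF that] x by auto
        moreover have "y \<in> B \<inter> ?C" unfolding B_def yy using y yy i by auto
        ultimately show False using connected_closed[of ?C] cA connected_connected_component by blast
      qed
    qed
  qed
  show ?thesis unfolding cantor_set_def
    using compact_img_coord(2)[OF c] perf tot by auto
qed

lemma len_drop_take: "drop o' (take (o' + length w) D) = w \<Longrightarrow> w \<noteq> [] \<Longrightarrow> o' + length w \<le> length D"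
proof -
  assume a: "drop o' (take (o' + length w) D) = w" "w \<noteq> []"
  from arg_cong[of _ _ length, OF a(1)] have "min (o' + length w) (length D) - o' = length w" by simp
  moreover have "length w > 0" using a(2) by simp
  ultimately show ?thesis
  proof -
    assume m: "min (o' + length w) (length D) - o' = length w" and l: "length w > 0"
    show ?thesis
    proof (rule ccontr)
      assume n: "\<not> o' + length w \<le> length D"
      then have "min (o' + length w) (length D) = length D" by simp
      then show False using m n l by linarith
    qed
  qed
qed

locale sys2 = sys +
  fixes en :: "nat \<Rightarrow> 'a list \<times> int"
  assumes en_L: "fst (en m) \<in> L" and en_surj: "w \<in> L \<Longrightarrow> \<exists>m. en m = (w, c)"
  and E5: "y \<in> Y \<Longrightarrow> r > 0 \<Longrightarrow> \<exists>w\<in>L. \<exists>c. \<forall>z. good z \<and> win z c (length w) = w \<longrightarrow> dist (E z) y < r"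
begin

lemma modulus:
  assumes D: "Dok M D" and e: "e > 0"
  shows "\<exists>K. \<forall>\<omega> \<omega>'. (\<forall>i<K. \<omega> i = \<omega>' i) \<longrightarrow>
     dist (E (pt q M D (ctype n (code m \<omega>)))) (E (pt q M D (ctype n (code m \<omega>')))) < e"
proof -
  obtain N where N: "\<forall>z z'. good z \<and> good z' \<and> (\<forall>i. - int N \<le> i \<and> i \<le> int N \<longrightarrow> z i = z' i)
             \<longrightarrow> dist (E z) (E z') < e" using E3[OF e] by blast
  show ?thesis
  proof (intro exI[of _ "N + n"] allI impI)
    fix \<omega> \<omega>' :: "nat \<Rightarrow> bool" assume ag: "\<forall>i<N + n. \<omega> i = \<omega>' i"
    have cag: "code m \<omega> i = code m \<omega>' i" if "i \<le> N + n" for i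
      using code_agree[of "N + n" \<omega> \<omega>' i m] ag that by blast
    have "pt q M D (ctype n (code m \<omega>)) i = pt q M D (ctype n (code m \<omega>')) i"
      if i: "- int N \<le> i" "i \<le> int N" for i
    proof -
      define j where "j = i div int p"
      have dm: "j * int p + i mod int p = i" unfolding j_def by (rule div_mult_mod_eq)
      have "0 \<le> i mod int p" using p_pos by simp
      then have jp: "j * int p \<le> i" using dm by linarith
      have "j \<le> int N"
      proof (cases "j < 0")
        case False
        then have "j * 1 \<le> j * int p" using p_pos by (intro mult_left_mono) auto
        then show ?thesis using jp i by linarith
      qed (use i in linarith)
      then have "ctype n (code m \<omega>) j = ctype n (code m \<omega>') j"
        by (intro ctype_agree[of "N + n"]) (use cag in auto)
      then show ?thesis unfolding pt_def Let_def j_def[symmetric] by simp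
    qed
    then show "dist (E (pt q M D (ctype n (code m \<omega>)))) (E (pt q M D (ctype n (code m \<omega>')))) < e"
      using N good_pt[OF D] by blast
  qed
qed

theorem core:
  "\<exists>\<epsilon>>0. \<exists>k::nat. k > 0 \<and> (\<exists>T. T \<subseteq> Y \<and> Y \<subseteq> closure T \<and> mycielski_set T \<and>
              (g ^^ k) ` T \<subseteq> T \<and> synd_eps_scrambled g \<epsilon> T)"
proof -
  have ex: "\<forall>m. \<exists>D M q off. 1 \<le> M \<and> D \<in> L \<and> length D = M * p + length s \<and> take (length s) D = s \<and>
     drop (M * p) D = s \<and> drop off (take (off + length (fst (en m))) D) = fst (en m) \<and> q * int p + int off = snd (en m)"
    using connector_exist[OF en_L p_pos] by blast
  then obtain DD MM qq ofs where DQ: "\<forall>m. 1 \<le> MM m \<and> DD m \<in> L \<and> length (DD m) = MM m * p + length s \<and> take (length s) (DD m) = s \<and>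
     drop (MM m * p) (DD m) = s \<and> drop (ofs m) (take (ofs m + length (fst (en m))) (DD m)) = fst (en m) \<and> qq m * int p + int (ofs m) = snd (en m)"
    by metis
  have Dok: "Dok (MM m) (DD m)" for m using DQ by (simp add: Dok_def)
  define h where "h m n \<omega> = E (pt (qq m - int n) (MM m) (DD m) (ctype n (code m \<omega>)))" for m n \<omega>
  define T where "T = (\<Union>m n. range (h m n))"
  have scr: "(h m n \<omega>, h m' n' \<omega>') \<in> SProx g - Asy g \<and>
      ereal \<epsilon> \<le> limsup (\<lambda>t. ereal (dist ((g ^^ t) (h m n \<omega>)) ((g ^^ t) (h m' n' \<omega>')))) \<and>
      h m n \<omega> \<noteq> h m' n' \<omega>'"
    if "n \<noteq> n' \<or> code m \<omega> \<noteq> code m' \<omega>'" for m n \<omega> m' n' \<omega>'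
    unfolding h_def by (rule scr_pair[OF Dok Dok code0 code0 that])
  have TY: "T \<subseteq> Y" unfolding T_def h_def using E1 good_pt[OF Dok] by auto
  have gT: "(g ^^ p) ` T \<subseteq> T"
  proof
    fix x assume "x \<in> (g ^^ p) ` T"
    then obtain m n \<omega> where x: "x = (g ^^ p) (h m n \<omega>)" unfolding T_def by blast
    let ?z = "pt (qq m - int n) (MM m) (DD m) (ctype n (code m \<omega>))"
    have "x = E (\<lambda>i. ?z (i + int p))" unfolding x h_def using E2[OF good_pt[OF Dok]] by simp
    also have "(\<lambda>i. ?z (i + int p)) = (\<lambda>i. ?z (i + int 1 * int p))" by simp
    also have "\<dots> = pt (qq m - int n - int 1) (MM m) (DD m) (\<lambda>j. ctype n (code m \<omega>) (j + int 1))"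
      by (rule pt_shift)
    also have "\<dots> = pt (qq m - int (Suc n)) (MM m) (DD m) (ctype (Suc n) (code m \<omega>))"
      unfolding ctype_shift by (simp add: algebra_simps)
    finally have "x = h m (Suc n) \<omega>" unfolding h_def .
    then show "x \<in> T" unfolding T_def by blast
  qed
  have myc: "mycielski_set T"
    unfolding mycielski_set_def
  proof (intro exI conjI)
    show "countable ((\<lambda>(m, n). range (h m n)) ` UNIV)" by simp
    show "\<forall>C\<in>(\<lambda>(m, n). range (h m n)) ` UNIV. cantor_set C"
    proof clarify
      fix m n
      show "cantor_set (range (h m n))"
      proof (rule cantor_image)
        show "inj (h m n)"
        proof (rule injI)
          fix \<omega> \<omega>' assume e: "h m n \<omega> = h m n \<omega>'"
          show "\<omega> = \<omega>'"
          proof (rule ccontr)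
            assume "\<omega> \<noteq> \<omega>'"
            then have "code m \<omega> \<noteq> code m \<omega>'" using code_inj by blast
            then show False using scr[of n n m \<omega> m \<omega>'] e by blast
          qed
        qed
        fix e :: real assume "e > 0"
        then show "\<exists>K. \<forall>\<omega> \<omega>'. (\<forall>i<K. \<omega> i = \<omega>' i) \<longrightarrow> dist (h m n \<omega>) (h m n \<omega>') < e"
          unfolding h_def by (rule modulus[OF Dok])
      qed
    qed
    show "T = \<Union> ((\<lambda>(m, n). range (h m n)) ` UNIV)" unfolding T_def by auto
  qed
  have dense: "Y \<subseteq> closure T"
  proof
    fix y assume y: "y \<in> Y"
    show "y \<in> closure T" unfolding closure_approachable
    proof (intro allI impI)
      fix r :: real assume r: "r > 0"
      obtain w c where w: "w \<in> L" "\<forall>z. good z \<and> win z c (length w) = w \<longrightarrow> dist (E z) y < r"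
        using E5[OF y r] by blast
      obtain m where m: "en m = (w, c)" using en_surj[OF w(1)] by blast
      let ?z = "pt (qq m) (MM m) (DD m) (ctype 0 (code m (\<lambda>_. True)))"
      have "win ?z c (length w) = w"
      proof (cases "w = []")
        case True then show ?thesis by (simp add: win_def)
      next
        case False
        have d: "drop (ofs m) (take (ofs m + length w) (DD m)) = w" and cc: "qq m * int p + int (ofs m) = c"
          using DQ m by (metis fst_conv, metis snd_conv)
        have b: "ofs m + length w \<le> MM m * p + length s"
          using len_drop_take[OF d False] DQ by simp
        have "win ?z (qq m * int p + int (ofs m)) (length w) =
           drop (ofs m) (take (ofs m + length w) (win ?z (qq m * int p) (MM m * p + length s)))"
          by (rule win_sub[OF b])
        also have "\<dots> = w" using win_D[OF Dok] d by simp
        finally show ?thesis using cc by simp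
      qed
      then have "dist (E ?z) y < r" using w(2) good_pt[OF Dok] by blast
      moreover have "E ?z \<in> T" unfolding T_def h_def by (intro UN_I[of m] UN_I[of 0]) auto
      ultimately show "\<exists>x\<in>T. dist x y < r" by blast
    qed
  qed
  have scrT: "synd_eps_scrambled g \<epsilon> T"
    unfolding synd_eps_scrambled_def
  proof (intro conjI ballI impI)
    have "code 0 (\<lambda>_. True) \<noteq> code 0 (\<lambda>_. False)"
      using code_inj by (metis (full_types))
    then have "h 0 0 (\<lambda>_. True) \<noteq> h 0 0 (\<lambda>_. False)" using scr by blast
    then show "\<exists>x\<in>T. \<exists>y\<in>T. x \<noteq> y" unfolding T_def by blast
  next
    fix x y assume x: "x \<in> T" and y: "y \<in> T" and xy: "x \<noteq> y"
    obtain m n \<omega> where xx: "x = h m n \<omega>" using x unfolding T_def by blast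
    obtain m' n' \<omega>' where yy: "y = h m' n' \<omega>'" using y unfolding T_def by blast
    have "n \<noteq> n' \<or> code m \<omega> \<noteq> code m' \<omega>'"
    proof (rule ccontr)
      assume "\<not> (n \<noteq> n' \<or> code m \<omega> \<noteq> code m' \<omega>')"
      then have "n = n'" "m = m'" "\<omega> = \<omega>'" using code_inj by auto
      then show False using xy xx yy by simp
    qed
    from scr[OF this] show "(x, y) \<in> SProx g - Asy g" and
      "ereal \<epsilon> \<le> limsup (\<lambda>n. ereal (dist ((g ^^ n) x) ((g ^^ n) y)))" unfolding xx yy by blast+
  qed
  show ?thesis using eps p_pos TY dense myc gT scrT by blast
qed

end

lemma uncountable_nat_bool: "\<not> countable (UNIV :: (nat \<Rightarrow> bool) set)"
proof
  assume "countable (UNIV :: (nat \<Rightarrow> bool) set)"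
  then have "range (from_nat_into (UNIV :: (nat \<Rightarrow> bool) set)) = UNIV"
    by (simp add: range_from_nat_into)
  then obtain n where "from_nat_into UNIV n = (\<lambda>i. \<not> from_nat_into (UNIV :: (nat \<Rightarrow> bool) set) i i)"
    by (metis UNIV_I imageE)
  from fun_cong[OF this, of n] show False by simp
qed

context blk
begin

lemma distinct_pts:
  assumes ne: "u0 \<noteq> u1" and w: "\<omega> \<noteq> \<omega>'"
  shows "\<exists>i\<ge>0. pt 0 1 B0 (ctype 0 \<omega>) i \<noteq> pt 0 1 B0 (ctype 0 \<omega>') i"
proof -
  have D: "Dok 1 B0" unfolding Dok_def using B0L lenB0 tB0 dB0 by simp
  obtain i where i: "\<omega> i \<noteq> \<omega>' i" using w by blast
  define k where "k = prod_encode (i, 1)"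
  define j :: int where "j = 2 ^ k"
  have j1: "0 + int 1 \<le> j" unfolding j_def by simp
  have ct: "ctype 0 \<omega> j = \<omega> i" "ctype 0 \<omega>' j = \<omega>' i" using ctype_at[of 0 _ k] unfolding j_def k_def by simp_all
  have B01: "B0 \<noteq> B1" using ne uB0 uB1 lenu by metis
  have "win (pt 0 1 B0 (ctype 0 \<omega>)) (j * int p) (p + length s) \<noteq> win (pt 0 1 B0 (ctype 0 \<omega>')) (j * int p) (p + length s)"
    unfolding win_blk[OF D j1] ct using i B01 by (simp add: blkw_def)
  then obtain r where r: "r < p + length s" "pt 0 1 B0 (ctype 0 \<omega>) (j * int p + int r) \<noteq> pt 0 1 B0 (ctype 0 \<omega>') (j * int p + int r)"
  proof -
    assume a: "\<And>r. r < p + length s \<Longrightarrow> pt 0 1 B0 (ctype 0 \<omega>) (j * int p + int r) \<noteq> pt 0 1 B0 (ctype 0 \<omega>') (j * int p + int r) \<Longrightarrow> thesis"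
      and b: "win (pt 0 1 B0 (ctype 0 \<omega>)) (j * int p) (p + length s) \<noteq> win (pt 0 1 B0 (ctype 0 \<omega>')) (j * int p) (p + length s)"
    show thesis
    proof (rule ccontr)
      assume "\<not> thesis"
      then have "win (pt 0 1 B0 (ctype 0 \<omega>)) (j * int p) (p + length s) = win (pt 0 1 B0 (ctype 0 \<omega>')) (j * int p) (p + length s)"
        using a by (intro win_eqI) auto
      then show False using b by simp
    qed
  qed
  moreover have "0 \<le> j * int p + int r" unfolding j_def by simp
  ultimately show ?thesis by blast
qed

end

context lang
begin

lemma cantor_family:
  assumes u0: "u0 \<in> L" and u1: "u1 \<in> L" and len: "length u0 = length u1" and ne: "u0 \<noteq> u1"
  shows "\<exists>\<Phi> :: (nat \<Rightarrow> bool) \<Rightarrow> int \<Rightarrow> 'a. (\<forall>\<omega>. good (\<Phi> \<omega>)) \<and> (\<forall>\<omega> \<omega>'. \<omega> \<noteq> \<omega>' \<longrightarrow> (\<exists>i\<ge>0. \<Phi> \<omega> i \<noteq> \<Phi> \<omega>' i))"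
proof -
  obtain B0 B1 p off where b: "0 < p \<and> length s \<le> p \<and> B0 \<in> L \<and> B1 \<in> L \<and>
     length B0 = p + length s \<and> length B1 = p + length s \<and>
     take (length s) B0 = s \<and> take (length s) B1 = s \<and> drop p B0 = s \<and> drop p B1 = s \<and>
     drop off (take (off + length u0) B0) = u0 \<and> drop off (take (off + length u1) B1) = u1"
    using blocks_exist[OF u0 u1 len] by blast
  interpret blk L s B0 B1 p off u0 u1
    by unfold_locales (use b len in auto)
  have D: "Dok 1 B0" unfolding Dok_def using B0L lenB0 tB0 dB0 by simp
  have "\<forall>\<omega>. good (pt 0 1 B0 (ctype 0 \<omega>))" using good_pt[OF D] by blast
  moreover have "\<forall>\<omega> \<omega>'. \<omega> \<noteq> \<omega>' \<longrightarrow> (\<exists>i\<ge>0. pt 0 1 B0 (ctype 0 \<omega>) i \<noteq> pt 0 1 B0 (ctype 0 \<omega>') i)"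
    using distinct_pts[OF ne] by blast
  ultimately show ?thesis apply - apply (rule exI[of _ "\<lambda>\<omega>. pt 0 1 B0 (ctype 0 \<omega>)"]) by simp
qed

lemma finish:
  fixes E :: "(int \<Rightarrow> 'a) \<Rightarrow> 'b::metric_space" and Y :: "'b set" and g :: "'b \<Rightarrow> 'b"
    and en :: "nat \<Rightarrow> 'a list \<times> int"
  assumes E1: "\<And>z. good z \<Longrightarrow> E z \<in> Y"
  and E2: "\<And>z t. good z \<Longrightarrow> E (\<lambda>i. z (i + int t)) = (g ^^ t) (E z)"
  and E3: "\<And>\<eta>. \<eta> > 0 \<Longrightarrow> \<exists>N. \<forall>z z'. good z \<and> good z' \<and> (\<forall>i. - int N \<le> i \<and> i \<le> int N \<longrightarrow> z i = z' i)
             \<longrightarrow> dist (E z) (E z') < \<eta>"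
  and E5: "\<And>e. e > 0 \<Longrightarrow> \<exists>N c. \<forall>y\<in>Y. \<exists>w\<in>L. length w = N \<and> w \<noteq> [] \<and>
             (\<forall>z. good z \<and> win z c N = w \<longrightarrow> dist (E z) y < e)"
  and two: "y1 \<in> Y" "y2 \<in> Y" "y1 \<noteq> y2"
  and en_L: "\<And>m. fst (en m) \<in> L" and en_surj: "\<And>w c. w \<in> L \<Longrightarrow> \<exists>m. en m = (w, c)"
  shows "\<exists>\<epsilon>>0. \<exists>k::nat. k > 0 \<and> (\<exists>T. T \<subseteq> Y \<and> Y \<subseteq> closure T \<and> mycielski_set T \<and>
              (g ^^ k) ` T \<subseteq> T \<and> synd_eps_scrambled g \<epsilon> T)"
proof -
  define \<epsilon> where "\<epsilon> = dist y1 y2 / 3"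
  have eps: "\<epsilon> > 0" using two unfolding \<epsilon>_def by simp
  obtain N c0 where N: "\<forall>y\<in>Y. \<exists>w\<in>L. length w = N \<and> w \<noteq> [] \<and>
             (\<forall>z. good z \<and> win z c0 N = w \<longrightarrow> dist (E z) y < \<epsilon>)" using E5[OF eps] by blast
  obtain u0 where u0: "u0 \<in> L" "length u0 = N" "u0 \<noteq> []" "\<forall>z. good z \<and> win z c0 N = u0 \<longrightarrow> dist (E z) y1 < \<epsilon>"
    using N two(1) by blast
  obtain u1 where u1: "u1 \<in> L" "length u1 = N" "\<forall>z. good z \<and> win z c0 N = u1 \<longrightarrow> dist (E z) y2 < \<epsilon>"
    using N two(2) by blast
  have len: "length u0 = length u1" using u0 u1 by simp
  obtain B0 B1 p off where b: "0 < p \<and> length s \<le> p \<and> B0 \<in> L \<and> B1 \<in> L \<and>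
     length B0 = p + length s \<and> length B1 = p + length s \<and>
     take (length s) B0 = s \<and> take (length s) B1 = s \<and> drop p B0 = s \<and> drop p B1 = s \<and>
     drop off (take (off + length u0) B0) = u0 \<and> drop off (take (off + length u1) B1) = u1"
    using blocks_exist[OF u0(1) u1(1) len] by blast
  have offb: "off + length u0 \<le> p + length s"
    using len_drop_take[of off u0 B0] b u0(3) by simp
  have E4: "\<epsilon> \<le> dist (E z) (E z')"
    if "good z" "good z'" "win z c0 (length u0) = u0" "win z' c0 (length u1) = u1" for z z'
  proof -
    have "dist (E z) y1 < \<epsilon>" "dist (E z') y2 < \<epsilon>" using that u0 u1 by auto
    moreover have "dist y1 y2 \<le> dist (E z) y1 + dist (E z) (E z') + dist (E z') y2"
      using dist_triangle[of y1 y2 "E z"] dist_triangle[of "E z" y2 "E z'"] dist_commute[of y1 "E z"] dist_commute[of "E z'" y2]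
      by linarith
    ultimately show ?thesis unfolding \<epsilon>_def by linarith
  qed
  interpret sys2 L s B0 B1 p off u0 u1 E Y g \<epsilon> c0 en
  proof unfold_locales
    fix y r assume "y \<in> Y" "(0::real) < r"
    from E5[OF this(2)] obtain N' c where "\<forall>y\<in>Y. \<exists>w\<in>L. length w = N' \<and> w \<noteq> [] \<and>
             (\<forall>z. good z \<and> win z c N' = w \<longrightarrow> dist (E z) y < r)" by blast
    then show "\<exists>w\<in>L. \<exists>c. \<forall>z. good z \<and> win z c (length w) = w \<longrightarrow> dist (E z) y < r"
      using \<open>y \<in> Y\<close> by metis
  qed (use b len offb E1 E2 E3 eps E4 en_L en_surj in auto)
  show ?thesis by (rule core)
qed

end

lemma topspace_shift_top[simp]: "topspace (shift_top :: ('i \<Rightarrow> 'a) topology) = UNIV"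
  by (simp add: shift_top_def topspace_product_topology PiE_UNIV_domain)

lemma compact_shift_top: "compact_space (shift_top :: ('i \<Rightarrow> 'a::finite) topology)"
  unfolding shift_top_def
  by (simp add: compact_space_product_topology compact_space_discrete_topology)

lemma cyl_open:
  assumes "finite F"
  shows "openin shift_top {x :: 'i \<Rightarrow> 'a. \<forall>i\<in>F. P i (x i)}"
  unfolding shift_top_def openin_product_topology_alt
proof (intro ballI)
  fix x :: "'i \<Rightarrow> 'a" assume x: "x \<in> {x. \<forall>i\<in>F. P i (x i)}"
  define V where "V i = (if i \<in> F then {a. P i a} else UNIV)" for i
  have "finite {i \<in> UNIV. V i \<noteq> topspace (discrete_topology UNIV)}"
    by (rule finite_subset[OF _ assms]) (auto simp: V_def)
  moreover have "x \<in> Pi\<^sub>E UNIV V" using x by (auto simp: V_def PiE_UNIV_domain)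
  moreover have "Pi\<^sub>E UNIV V \<subseteq> {x. \<forall>i\<in>F. P i (x i)}" by (auto simp: V_def PiE_UNIV_domain Pi_def)
  ultimately show "\<exists>U. finite {i \<in> UNIV. U i \<noteq> topspace (discrete_topology UNIV)} \<and>
       (\<forall>i\<in>UNIV. openin (discrete_topology UNIV) (U i)) \<and> x \<in> Pi\<^sub>E UNIV U \<and> Pi\<^sub>E UNIV U \<subseteq> {x. \<forall>i\<in>F. P i (x i)}"
    by auto
qed

lemma open_cyl_nbhd:
  assumes "openin (shift_top :: ('i \<Rightarrow> 'a) topology) Ob" "x \<in> Ob"
  shows "\<exists>F. finite F \<and> (\<forall>y. (\<forall>i\<in>F. y i = x i) \<longrightarrow> y \<in> Ob)"
proof -
  obtain V where V: "finite {i \<in> UNIV. V i \<noteq> topspace (discrete_topology UNIV)}"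
    "x \<in> Pi\<^sub>E UNIV V" "Pi\<^sub>E UNIV V \<subseteq> Ob"
    using assms unfolding shift_top_def openin_product_topology_alt by blast
  define F where "F = {i \<in> UNIV. V i \<noteq> topspace (discrete_topology (UNIV :: 'a set))}"
  have "y \<in> Ob" if "\<forall>i\<in>F. y i = x i" for y
  proof -
    have "y i \<in> V i" for i
    proof (cases "i \<in> F")
      case True then show ?thesis using that V(2) by (auto simp: PiE_UNIV_domain)
    next
      case False then show ?thesis unfolding F_def by simp
    qed
    then show ?thesis using V(3) by (auto simp: PiE_UNIV_domain)
  qed
  then show ?thesis using V(1) unfolding F_def by blast
qed

lemma closed_approx:
  fixes X :: "('i \<Rightarrow> 'a) set"
  assumes cl: "closedin shift_top X" and ap: "\<And>F. finite F \<Longrightarrow> \<exists>y\<in>X. \<forall>i\<in>F. y i = x i"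
  shows "x \<in> X"
proof -
  have "x \<in> shift_top closure_of X" unfolding in_closure_of
  proof (intro conjI allI impI)
    show "x \<in> topspace shift_top" by simp
    fix Ob assume "x \<in> Ob \<and> openin shift_top Ob"
    then obtain F where F: "finite F" "\<forall>y. (\<forall>i\<in>F. y i = x i) \<longrightarrow> y \<in> Ob"
      using open_cyl_nbhd by blast
    obtain y where "y \<in> X" "\<forall>i\<in>F. y i = x i" using ap[OF F(1)] by blast
    then show "\<exists>y. y \<in> X \<and> y \<in> Ob" using F(2) by blast
  qed
  then show ?thesis using closure_of_closedin[OF cl] by simp
qed

lemma unif:
  fixes X :: "('i \<Rightarrow> 'a::finite) set" and \<pi> :: "('i \<Rightarrow> 'a) \<Rightarrow> 'b::metric_space"
  assumes cl: "closedin shift_top X" and c: "continuous_map (subtopology shift_top X) (top_of_set Y) \<pi>"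
    and e: "e > 0"
  shows "\<exists>F. finite F \<and> (\<forall>x\<in>X. \<forall>y\<in>X. (\<forall>i\<in>F. x i = y i) \<longrightarrow> dist (\<pi> x) (\<pi> y) < e)"
proof -
  have imY: "\<pi> ` X \<subseteq> Y" using continuous_map_image_subset_topspace[OF c] by simp
  have loc: "\<exists>F. finite F \<and> (\<forall>y\<in>X. (\<forall>i\<in>F. y i = x i) \<longrightarrow> dist (\<pi> y) (\<pi> x) < e / 2)" if x: "x \<in> X" for x
  proof -
    have "openin (top_of_set Y) (Y \<inter> ball (\<pi> x) (e/2))" by (rule openin_open_Int) simp
    from openin_continuous_map_preimage[OF c this]
    have "openin (subtopology shift_top X) {y \<in> X. \<pi> y \<in> Y \<inter> ball (\<pi> x) (e/2)}" by simp
    then obtain Ob where Ob: "openin shift_top Ob" "{y \<in> X. \<pi> y \<in> Y \<inter> ball (\<pi> x) (e/2)} = Ob \<inter> X"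
      unfolding openin_subtopology by blast
    have "\<pi> x \<in> Y" using imY x by blast
    then have "x \<in> {y \<in> X. \<pi> y \<in> Y \<inter> ball (\<pi> x) (e/2)}" using x e by simp
    then have "x \<in> Ob" using Ob(2) by blast
    then obtain F where F: "finite F" "\<forall>y. (\<forall>i\<in>F. y i = x i) \<longrightarrow> y \<in> Ob" using open_cyl_nbhd[OF Ob(1)] by blast
    have "dist (\<pi> y) (\<pi> x) < e / 2" if "y \<in> X" "\<forall>i\<in>F. y i = x i" for y
    proof -
      have "y \<in> Ob \<inter> X" using F that by blast
      then have "y \<in> {y \<in> X. \<pi> y \<in> Y \<inter> ball (\<pi> x) (e/2)}" using Ob(2) by blast
      then show ?thesis by (simp add: dist_commute)
    qed
    then show ?thesis using F(1) by blast
  qed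
  then have "\<forall>x\<in>X. \<exists>F. finite F \<and> (\<forall>y\<in>X. (\<forall>i\<in>F. y i = x i) \<longrightarrow> dist (\<pi> y) (\<pi> x) < e / 2)"
    by blast
  from bchoice[OF this] obtain Fx where Fx: "\<forall>x\<in>X. finite (Fx x) \<and> (\<forall>y\<in>X. (\<forall>i\<in>Fx x. y i = x i) \<longrightarrow> dist (\<pi> y) (\<pi> x) < e / 2)"
    by blast
  define C where "C x = {y. \<forall>i\<in>Fx x. y i = x i}" for x
  have cpt: "compactin shift_top X" by (rule closedin_compact_space[OF compact_shift_top cl])
  have op: "\<forall>U\<in>C ` X. openin shift_top U"
  proof
    fix U assume "U \<in> C ` X"
    then obtain x where "x \<in> X" "U = C x" by blast
    then show "openin shift_top U" unfolding C_def using Fx cyl_open[of "Fx x" "\<lambda>i a. a = x i"] by simp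
  qed
  have cov: "X \<subseteq> \<Union> (C ` X)" unfolding C_def by blast
  have cc: "\<forall>\<U>. (\<forall>U\<in>\<U>. openin shift_top U) \<and> X \<subseteq> \<Union>\<U> \<longrightarrow> (\<exists>\<F>. finite \<F> \<and> \<F> \<subseteq> \<U> \<and> X \<subseteq> \<Union>\<F>)"
    using cpt unfolding compactin_def by blast
  obtain \<F> where \<F>: "finite \<F>" "\<F> \<subseteq> C ` X" "X \<subseteq> \<Union>\<F>"
    using cc[rule_format, OF conjI[OF op cov]] by blast
  obtain G where G: "G \<subseteq> X" "finite G" "\<F> = C ` G" using finite_subset_image[OF \<F>(1,2)] by blast
  define F where "F = \<Union> (Fx ` G)"
  have fF: "finite F" unfolding F_def using G Fx by blast
  have "dist (\<pi> x) (\<pi> y) < e" if xy: "x \<in> X" "y \<in> X" "\<forall>i\<in>F. x i = y i" for x y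
  proof -
    obtain x0 where x0: "x0 \<in> G" "x \<in> C x0" using \<F>(3) G(3) xy(1) by blast
    have x0X: "x0 \<in> X" using x0 G by blast
    have sub: "Fx x0 \<subseteq> F" unfolding F_def using x0 by blast
    have xa: "\<forall>i\<in>Fx x0. x i = x0 i" using x0 unfolding C_def by blast
    then have ya: "\<forall>i\<in>Fx x0. y i = x0 i" using xy(3) sub by (metis subsetD)
    have "dist (\<pi> x) (\<pi> x0) < e / 2" using Fx x0X xy(1) xa by blast
    moreover have "dist (\<pi> y) (\<pi> x0) < e / 2" using Fx x0X xy(2) ya by blast
    ultimately show ?thesis using dist_triangle2[of "\<pi> x" "\<pi> y" "\<pi> x0"] by linarith
  qed
  then show ?thesis using fF by blast
qed

lemma shift_pow: "(shift ^^ n) x = (\<lambda>i. x (i + of_nat n))"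
proof (induction n)
  case 0 then show ?case by simp
next
  case (Suc n) then show ?case by (simp add: shift_def algebra_simps)
qed

lemma lang_of_subshift:
  fixes X :: "('i::comm_semiring_1 \<Rightarrow> 'a::finite) set"
  assumes cl: "closedin shift_top X"
  and SH: "\<And>x i. x \<in> X \<Longrightarrow> \<exists>y\<in>X. \<forall>j. y j = x (i + j)"
  and shX: "\<And>x. x \<in> X \<Longrightarrow> shift x \<in> X"
  and mx: "mixing_sys shift_top X shift"
  and sw: "synchronizing_word X s"
  shows "lang (language X) s"
proof
  fix w i j assume "w \<in> language X"
  then obtain x a n where w: "x \<in> X" "w = map (\<lambda>j. x (a + of_nat j)) [0..<n]"
    unfolding language_def by blast
  have "drop i (take j w) = map (\<lambda>k. x ((a + of_nat i) + of_nat k)) [0..<min j n - i]"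
    unfolding w(2)
  proof (rule nth_equalityI)
    fix k assume "k < length (drop i (take j (map (\<lambda>j. x (a + of_nat j)) [0..<n])))"
    then have k: "i + k < min j n" by (simp add: min_def split: if_splits)
    then have "drop i (take j (map (\<lambda>j. x (a + of_nat j)) [0..<n])) ! k = x (a + of_nat (i + k))"
      by (simp add: nth_drop)
    then show "drop i (take j (map (\<lambda>j. x (a + of_nat j)) [0..<n])) ! k = map (\<lambda>k. x (a + of_nat i + of_nat k)) [0..<min j n - i] ! k"
    proof -
      have "k < min j n - i" using k by linarith
      then show ?thesis using \<open>drop i (take j (map (\<lambda>j. x (a + of_nat j)) [0..<n])) ! k = x (a + of_nat (i + k))\<close>
        by (simp add: algebra_simps)
    qed
  qed simp
  then show "drop i (take j w) \<in> language X" unfolding language_def using w(1) by blast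
next
  fix u v assume "u @ s \<in> language X" "s @ v \<in> language X"
  then show "u @ s @ v \<in> language X" using sw unfolding synchronizing_word_def by blast
next
  show "s \<in> language X" using sw unfolding synchronizing_word_def by blast
next
  fix u v assume u: "u \<in> language X" and v: "v \<in> language X"
  have start: "\<exists>x\<in>X. \<forall>j<length w. x (of_nat j) = w ! j" if wL: "w \<in> language X" for w
  proof -
    obtain x a n where w: "x \<in> X" "w = map (\<lambda>j. x (a + of_nat j)) [0..<n]"
      using wL unfolding language_def by blast
    obtain y where "y \<in> X" "\<forall>j. y j = x (a + j)" using SH[OF w(1)] by blast
    then show ?thesis using w(2) by auto
  qed
  define cy where "cy w = {x \<in> X. \<forall>j<length w. x (of_nat j) = w ! j}" for w
  have cyo: "openin (subtopology shift_top X) (cy w)" for w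
  proof -
    have eq: "{x. \<forall>j<length w. x (of_nat j) = w ! j} = {x. \<forall>i\<in>of_nat ` {..<length w}. \<forall>j<length w. i = of_nat j \<longrightarrow> x i = w ! j}"
      by auto
    have o: "openin shift_top {x. \<forall>i\<in>of_nat ` {..<length w}. \<forall>j<length w. i = of_nat j \<longrightarrow> x i = w ! j}"
      by (rule cyl_open) simp
    have "openin shift_top {x. \<forall>j<length w. x (of_nat j) = w ! j}"
      unfolding eq by (rule o)
    then show ?thesis unfolding openin_subtopology cy_def by blast
  qed
  have cyne: "cy w \<noteq> {}" if "w \<in> language X" for w using start[OF that] unfolding cy_def by blast
  have "finite {n. (shift ^^ n) ` cy u \<inter> cy v = {}}"
    using mx cyo cyne[OF u] cyne[OF v] unfolding mixing_sys_def by blast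
  then obtain N0 where "\<forall>n\<in>{n. (shift ^^ n) ` cy u \<inter> cy v = {}}. n < N0"
    using finite_nat_set_iff_bounded by blast
  then have N0: "\<forall>n\<ge>N0. (shift ^^ n) ` cy u \<inter> cy v \<noteq> {}" by force
  show "\<exists>N. \<forall>n\<ge>N. \<exists>W\<in>language X. length W = n + length v \<and> take (length u) W = u \<and> drop n W = v"
  proof (intro exI[of _ "max N0 (length u)"] allI impI)
    fix n assume n: "max N0 (length u) \<le> n"
    then obtain x where x: "x \<in> cy u" "(shift ^^ n) x \<in> cy v" using N0 by fastforce
    define W where "W = map (\<lambda>j. x (0 + of_nat j)) [0..<n + length v]"
    have "W \<in> language X" using x(1) unfolding W_def language_def cy_def by blast
    moreover have "take (length u) W = u"
      using x(1) n unfolding W_def cy_def by (intro nth_equalityI) auto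
    moreover have "drop n W = v"
      using x(2) unfolding W_def cy_def shift_pow by (intro nth_equalityI) (auto simp: add.commute)
    moreover have "length W = n + length v" unfolding W_def by simp
    ultimately show "\<exists>W\<in>language X. length W = n + length v \<and> take (length u) W = u \<and> drop n W = v"
      by blast
  qed
qed

lemma factor_iter:
  assumes f: "factor_map X Y g \<pi>" and shX: "\<And>x. x \<in> X \<Longrightarrow> shift x \<in> X" and x: "x \<in> X"
  shows "(shift ^^ t) x \<in> X \<and> \<pi> ((shift ^^ t) x) = (g ^^ t) (\<pi> x)"
proof (induction t)
  case 0 then show ?case using x by simp
next
  case (Suc t)
  then show ?case using f shX unfolding factor_map_def by simp
qed

lemma two_distinct: "infinite X \<Longrightarrow> \<exists>x1\<in>X. \<exists>x2\<in>X. x1 \<noteq> x2"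
  by (metis finite.emptyI finite_insert insertI1 insert_absorb singleton_iff subsetI ex_in_conv finite_subset)

lemma no_two_points:
  fixes Y :: "'b set" and \<Phi> :: "(nat \<Rightarrow> bool) \<Rightarrow> 'z" and R :: "'z \<Rightarrow> 'x" and \<pi> :: "'x \<Rightarrow> 'b"
  assumes RX: "\<And>\<omega>. R (\<Phi> \<omega>) \<in> XX" and inY: "\<And>\<omega>. \<pi> (R (\<Phi> \<omega>)) \<in> Y"
  and inj: "\<And>\<omega> \<omega>'. \<omega> \<noteq> \<omega>' \<Longrightarrow> R (\<Phi> \<omega>) \<noteq> R (\<Phi> \<omega>')"
  and fib: "\<And>y. y \<in> Y \<Longrightarrow> countable {x\<in>XX. \<pi> x = y}"
  shows "\<exists>y1\<in>Y. \<exists>y2\<in>Y. y1 \<noteq> y2"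
proof (rule ccontr)
  assume "\<not> (\<exists>y1\<in>Y. \<exists>y2\<in>Y. y1 \<noteq> y2)"
  then have all: "\<pi> (R (\<Phi> \<omega>)) = \<pi> (R (\<Phi> (\<lambda>_. True)))" for \<omega> using inY by blast
  let ?y = "\<pi> (R (\<Phi> (\<lambda>_. True)))"
  have "(\<lambda>\<omega>. R (\<Phi> \<omega>)) ` UNIV \<subseteq> {x\<in>XX. \<pi> x = ?y}" using all RX by auto
  then have "countable ((\<lambda>\<omega>. R (\<Phi> \<omega>)) ` UNIV)" using fib[OF inY] countable_subset by blast
  moreover have "inj (\<lambda>\<omega>. R (\<Phi> \<omega>))" using inj by (meson injI)
  ultimately have "countable (UNIV :: (nat \<Rightarrow> bool) set)"
    using countable_image_inj_on by blast
  then show False using uncountable_nat_bool by blast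
qed

definition enum_of :: "'a list set \<Rightarrow> 'a list \<Rightarrow> nat \<Rightarrow> ('a::countable) list \<times> int" where
  "enum_of L s m = (if fst (from_nat m :: 'a list \<times> int) \<in> L then from_nat m else (s, 0))"

lemma enum_of_L: "s \<in> L \<Longrightarrow> fst (enum_of L s m) \<in> L"
  unfolding enum_of_def by auto

lemma enum_of_surj: "w \<in> L \<Longrightarrow> \<exists>m. enum_of L s m = (w, c)"
  unfolding enum_of_def by (intro exI[of _ "to_nat (w, c)"]) simp

theorem one_sided_main:
  fixes Y :: "'b::metric_space set" and g :: "'b \<Rightarrow> 'b"
    and X :: "(nat \<Rightarrow> 'a::finite) set" and \<pi> :: "(nat \<Rightarrow> 'a) \<Rightarrow> 'b"
  assumes sub: "one_sided_subshift X" and inf: "infinite X" and mx: "mixing_sys shift_top X shift"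
    and sy: "synchronizing_subshift X" and fm: "factor_map X Y g \<pi>"
    and fib: "\<forall>y\<in>Y. countable {x\<in>X. \<pi> x = y}"
  shows "\<exists>\<epsilon>>0. \<exists>k::nat. k > 0 \<and> (\<exists>T. T \<subseteq> Y \<and> Y \<subseteq> closure T \<and> mycielski_set T \<and>
              (g ^^ k) ` T \<subseteq> T \<and> synd_eps_scrambled g \<epsilon> T)"
proof -
  have cl: "closedin shift_top X" and shX: "\<And>x. x \<in> X \<Longrightarrow> shift x \<in> X"
    using sub unfolding one_sided_subshift_def by auto
  obtain s where sw: "synchronizing_word X s" using sy unfolding synchronizing_subshift_def by blast
  have it: "(shift ^^ t) x \<in> X" if "x \<in> X" for x t
    using factor_iter[OF fm shX that] by blast
  have SH: "\<exists>y\<in>X. \<forall>j. y j = x (i + j)" if "x \<in> X" for x i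
    using it[OF that, of i] unfolding shift_pow by (auto simp: add.commute)
  interpret lang "language X" s by (rule lang_of_subshift[OF cl SH shX mx sw])
  define res :: "(int \<Rightarrow> 'a) \<Rightarrow> nat \<Rightarrow> 'a" where "res z = (\<lambda>n. z (int n))" for z
  have cont: "continuous_map (subtopology shift_top X) (top_of_set Y) \<pi>" and imX: "\<pi> ` X = Y"
    and comm: "\<And>x. x \<in> X \<Longrightarrow> \<pi> (shift x) = g (\<pi> x)"
    using fm unfolding factor_map_def by auto
  have inX: "res z \<in> X" if gz: "good z" for z
  proof (rule closed_approx[OF cl])
    fix F :: "nat set" assume "finite F"
    then obtain N where N: "\<forall>i\<in>F. i < N" using finite_nat_set_iff_bounded by blast
    have "win z 0 N \<in> language X" using gz unfolding good_def by blast
    then obtain x a n where x: "x \<in> X" "win z 0 N = map (\<lambda>j. x (a + of_nat j)) [0..<n]"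
      unfolding language_def by blast
    have n: "n = N" using arg_cong[OF x(2), of length] by simp
    obtain y where y: "y \<in> X" "\<forall>j. y j = x (a + j)" using SH[OF x(1)] by blast
    have "y i = res z i" if "i \<in> F" for i
    proof -
      have "i < N" using N that by blast
      then have "win z 0 N ! i = map (\<lambda>j. x (a + of_nat j)) [0..<n] ! i" using x(2) by simp
      then show ?thesis using \<open>i < N\<close> n y(2) unfolding res_def by simp
    qed
    then show "\<exists>y\<in>X. \<forall>i\<in>F. y i = res z i" using y(1) by blast
  qed
  define E where "E z = \<pi> (res z)" for z
  have E1: "E z \<in> Y" if "good z" for z using inX[OF that] imX unfolding E_def by blast
  have E2: "E (\<lambda>i. z (i + int t)) = (g ^^ t) (E z)" if "good z" for z t
  proof -
    have "res (\<lambda>i. z (i + int t)) = (shift ^^ t) (res z)" unfolding res_def shift_pow by simp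
    then show ?thesis unfolding E_def using factor_iter[OF fm shX inX[OF that]] by simp
  qed
  have E3: "\<exists>N. \<forall>z z'. good z \<and> good z' \<and> (\<forall>i. - int N \<le> i \<and> i \<le> int N \<longrightarrow> z i = z' i)
             \<longrightarrow> dist (E z) (E z') < \<eta>" if eta: "\<eta> > 0" for \<eta>
  proof -
    obtain F where F: "finite F" "\<forall>x\<in>X. \<forall>y\<in>X. (\<forall>i\<in>F. x i = y i) \<longrightarrow> dist (\<pi> x) (\<pi> y) < \<eta>"
      using unif[OF cl cont eta] by blast
    obtain N where N: "\<forall>i\<in>F. i \<le> N" using F(1) finite_nat_set_iff_bounded_le by blast
    show ?thesis
    proof (intro exI[of _ N] allI impI)
      fix z z' assume a: "good z \<and> good z' \<and> (\<forall>i. - int N \<le> i \<and> i \<le> int N \<longrightarrow> z i = z' i)"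
      then have "\<forall>i\<in>F. res z i = res z' i" using N unfolding res_def by force
      then show "dist (E z) (E z') < \<eta>" unfolding E_def using F(2) inX a by blast
    qed
  qed
  have E5: "\<exists>N c. \<forall>y\<in>Y. \<exists>w\<in>language X. length w = N \<and> w \<noteq> [] \<and>
             (\<forall>z. good z \<and> win z c N = w \<longrightarrow> dist (E z) y < e)" if e: "e > 0" for e
  proof -
    obtain F where F: "finite F" "\<forall>x\<in>X. \<forall>y\<in>X. (\<forall>i\<in>F. x i = y i) \<longrightarrow> dist (\<pi> x) (\<pi> y) < e"
      using unif[OF cl cont e] by blast
    obtain N where N: "\<forall>i\<in>F. i \<le> N" using F(1) finite_nat_set_iff_bounded_le by blast
    show ?thesis
    proof (intro exI[of _ "Suc N"] exI[of _ 0] ballI)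
      fix y assume "y \<in> Y"
      then obtain x where x: "x \<in> X" "\<pi> x = y" using imX by blast
      define w where "w = map (\<lambda>j. x (0 + of_nat j)) [0..<Suc N]"
      have wL: "w \<in> language X" unfolding w_def language_def using x(1) by blast
      have "dist (E z) y < e" if z: "good z" "win z 0 (Suc N) = w" for z
      proof -
        have "res z i = x i" if "i \<in> F" for i
        proof -
          have "i < Suc N" using N that by auto
          then have "win z 0 (Suc N) ! i = w ! i" using z(2) by simp
          then show ?thesis using \<open>i < Suc N\<close> unfolding w_def res_def by (simp del: upt_Suc)
        qed
        then show ?thesis unfolding E_def using F(2) inX[OF z(1)] x by blast
      qed
      then show "\<exists>w\<in>language X. length w = Suc N \<and> w \<noteq> [] \<and>
             (\<forall>z. good z \<and> win z 0 (Suc N) = w \<longrightarrow> dist (E z) y < e)"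
        using wL unfolding w_def by (intro bexI[of _ w]) (auto simp: w_def)
    qed
  qed
  obtain x1 x2 where xx: "x1 \<in> X" "x2 \<in> X" "x1 \<noteq> x2" using two_distinct[OF inf] by blast
  then obtain i0 where i0: "x1 i0 \<noteq> x2 i0" by blast
  define a0 where "a0 = map (\<lambda>j. x1 (0 + of_nat j)) [0..<Suc i0]"
  define a1 where "a1 = map (\<lambda>j. x2 (0 + of_nat j)) [0..<Suc i0]"
  have aL: "a0 \<in> language X" "a1 \<in> language X" unfolding a0_def a1_def language_def using xx by blast+
  have ane: "a0 \<noteq> a1" using arg_cong[of a0 a1 "\<lambda>l. l ! i0"] i0 unfolding a0_def a1_def by auto
  obtain \<Phi> :: "(nat \<Rightarrow> bool) \<Rightarrow> int \<Rightarrow> 'a" where \<Phi>: "\<forall>\<omega>. good (\<Phi> \<omega>)"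
    "\<forall>\<omega> \<omega>'. \<omega> \<noteq> \<omega>' \<longrightarrow> (\<exists>i\<ge>0. \<Phi> \<omega> i \<noteq> \<Phi> \<omega>' i)"
    using cantor_family[OF aL _ ane] unfolding a0_def a1_def by auto
  have "\<exists>y1\<in>Y. \<exists>y2\<in>Y. y1 \<noteq> y2"
  proof (rule no_two_points[where R = res and \<Phi> = \<Phi> and XX = X and \<pi> = \<pi>])
    fix \<omega> show "res (\<Phi> \<omega>) \<in> X" using inX \<Phi>(1) by blast
    then show "\<pi> (res (\<Phi> \<omega>)) \<in> Y" using imX by blast
  next
    fix \<omega> \<omega>' :: "nat \<Rightarrow> bool" assume "\<omega> \<noteq> \<omega>'"
    then obtain i where i: "i \<ge> 0" "\<Phi> \<omega> i \<noteq> \<Phi> \<omega>' i" using \<Phi>(2) by blast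
    then have "res (\<Phi> \<omega>) (nat i) \<noteq> res (\<Phi> \<omega>') (nat i)" unfolding res_def by simp
    then show "res (\<Phi> \<omega>) \<noteq> res (\<Phi> \<omega>')" by metis
  next
    fix y assume "y \<in> Y" then show "countable {x \<in> X. \<pi> x = y}" using fib by blast
  qed
  then obtain y1 y2 where yy: "y1 \<in> Y" "y2 \<in> Y" "y1 \<noteq> y2" by blast
  show ?thesis
    by (rule finish[of E Y g, OF E1 E2 E3 E5 yy, where en = "enum_of (language X) s"])
       (use enum_of_L[OF s_in] enum_of_surj in auto)
qed

lemma int_bound: "finite (F :: int set) \<Longrightarrow> \<exists>N::nat. \<forall>i\<in>F. - int N \<le> i \<and> i \<le> int N"
proof -
  assume "finite F"
  then have "finite ((\<lambda>i. nat \<bar>i\<bar>) ` F)" by simp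
  then obtain N where "\<forall>k\<in>(\<lambda>i. nat \<bar>i\<bar>) ` F. k \<le> N" using finite_nat_set_iff_bounded_le by blast
  then have "\<forall>i\<in>F. - int N \<le> i \<and> i \<le> int N" by force
  then show ?thesis by blast
qed

declare upt_Suc[simp del]

theorem two_sided_main:
  fixes Y :: "'b::metric_space set" and g :: "'b \<Rightarrow> 'b"
    and X :: "(int \<Rightarrow> 'a::finite) set" and \<pi> :: "(int \<Rightarrow> 'a) \<Rightarrow> 'b"
  assumes sub: "two_sided_subshift X" and inf: "infinite X" and mx: "mixing_sys shift_top X shift"
    and sy: "synchronizing_subshift X" and fm: "factor_map X Y g \<pi>"
    and fib: "\<forall>y\<in>Y. countable {x\<in>X. \<pi> x = y}"
  shows "\<exists>\<epsilon>>0. \<exists>k::nat. k > 0 \<and> (\<exists>T. T \<subseteq> Y \<and> Y \<subseteq> closure T \<and> mycielski_set T \<and>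
              (g ^^ k) ` T \<subseteq> T \<and> synd_eps_scrambled g \<epsilon> T)"
proof -
  have cl: "closedin shift_top X" and shXe: "shift ` X = X"
    using sub unfolding two_sided_subshift_def by auto
  have shX: "\<And>x. x \<in> X \<Longrightarrow> shift x \<in> X" using shXe by blast
  obtain s where sw: "synchronizing_word X s" using sy unfolding synchronizing_subshift_def by blast
  have it: "(shift ^^ t) x \<in> X" if "x \<in> X" for x t
    using factor_iter[OF fm shX that] by blast
  have bk: "\<exists>y\<in>X. \<forall>j. y j = x (j - int m)" if "x \<in> X" for x m
    using that
  proof (induction m arbitrary: x)
    case 0 then show ?case by auto
  next
    case (Suc m)
    obtain y where y: "y \<in> X" "\<forall>j. y j = x (j - int m)" using Suc by blast
    obtain y' where y': "y' \<in> X" "shift y' = y" using y(1) shXe by (metis imageE)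
    have "y' j = x (j - int (Suc m))" for j
      using fun_cong[OF y'(2), of "j - 1"] y(2) unfolding shift_def by (simp add: algebra_simps)
    then show ?case using y'(1) by blast
  qed
  have SH: "\<exists>y\<in>X. \<forall>j. y j = x (i + j)" if x: "x \<in> X" for x i
  proof (cases "i \<ge> 0")
    case True
    have "\<forall>j. (shift ^^ nat i) x j = x (i + j)" unfolding shift_pow using True by (simp add: add.commute)
    then show ?thesis using it[OF x] by blast
  next
    case False
    obtain y where "y \<in> X" "\<forall>j. y j = x (j - int (nat (- i)))" using bk[OF x] by blast
    then show ?thesis using False by (auto simp: algebra_simps)
  qed
  interpret lang "language X" s by (rule lang_of_subshift[OF cl SH shX mx sw])
  have cont: "continuous_map (subtopology shift_top X) (top_of_set Y) \<pi>" and imX: "\<pi> ` X = Y"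
    using fm unfolding factor_map_def by auto
  have inX: "z \<in> X" if gz: "good z" for z
  proof (rule closed_approx[OF cl])
    fix F :: "int set" assume "finite F"
    then obtain N where N: "\<forall>i\<in>F. - int N \<le> i \<and> i \<le> int N" using int_bound by blast
    have "win z (- int N) (2 * N + 1) \<in> language X" using gz unfolding good_def by blast
    then obtain x a n where x: "x \<in> X" "win z (- int N) (2 * N + 1) = map (\<lambda>j. x (a + of_nat j)) [0..<n]"
      unfolding language_def by blast
    have n: "n = 2 * N + 1" using arg_cong[OF x(2), of length] by simp
    obtain y where y: "y \<in> X" "\<forall>j. y j = x (a + int N + j)" using SH[OF x(1), of "a + int N"] by (auto simp: add.assoc)
    have "y i = z i" if "i \<in> F" for i
    proof -
      define k where "k = nat (i + int N)"
      have k: "k < 2 * N + 1" "int k = i + int N" using N that unfolding k_def by auto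
      then have "win z (- int N) (2 * N + 1) ! k = map (\<lambda>j. x (a + of_nat j)) [0..<n] ! k" using x(2) by simp
      then have "z (- int N + int k) = x (a + int k)" using k n by simp
      then show ?thesis using y(2) k by (simp add: algebra_simps)
    qed
    then show "\<exists>y\<in>X. \<forall>i\<in>F. y i = z i" using y(1) by blast
  qed
  have E1: "\<pi> z \<in> Y" if "good z" for z using inX[OF that] imX by blast
  have E2: "\<pi> (\<lambda>i. z (i + int t)) = (g ^^ t) (\<pi> z)" if "good z" for z t
    using factor_iter[OF fm shX inX[OF that], of t] unfolding shift_pow by simp
  have E3: "\<exists>N. \<forall>z z'. good z \<and> good z' \<and> (\<forall>i. - int N \<le> i \<and> i \<le> int N \<longrightarrow> z i = z' i)
             \<longrightarrow> dist (\<pi> z) (\<pi> z') < \<eta>" if eta: "\<eta> > 0" for \<eta>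
  proof -
    obtain F where F: "finite F" "\<forall>x\<in>X. \<forall>y\<in>X. (\<forall>i\<in>F. x i = y i) \<longrightarrow> dist (\<pi> x) (\<pi> y) < \<eta>"
      using unif[OF cl cont eta] by blast
    obtain N where N: "\<forall>i\<in>F. - int N \<le> i \<and> i \<le> int N" using int_bound[OF F(1)] by blast
    show ?thesis
    proof (intro exI[of _ N] allI impI)
      fix z z' assume a: "good z \<and> good z' \<and> (\<forall>i. - int N \<le> i \<and> i \<le> int N \<longrightarrow> z i = z' i)"
      then have "\<forall>i\<in>F. z i = z' i" using N by blast
      then show "dist (\<pi> z) (\<pi> z') < \<eta>" using F(2) inX a by blast
    qed
  qed
  have E5: "\<exists>N c. \<forall>y\<in>Y. \<exists>w\<in>language X. length w = N \<and> w \<noteq> [] \<and>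
             (\<forall>z. good z \<and> win z c N = w \<longrightarrow> dist (\<pi> z) y < e)" if e: "e > 0" for e
  proof -
    obtain F where F: "finite F" "\<forall>x\<in>X. \<forall>y\<in>X. (\<forall>i\<in>F. x i = y i) \<longrightarrow> dist (\<pi> x) (\<pi> y) < e"
      using unif[OF cl cont e] by blast
    obtain N where N: "\<forall>i\<in>F. - int N \<le> i \<and> i \<le> int N" using int_bound[OF F(1)] by blast
    show ?thesis
    proof (intro exI[of _ "2 * N + 1"] exI[of _ "- int N"] ballI)
      fix y assume "y \<in> Y"
      then obtain x where x: "x \<in> X" "\<pi> x = y" using imX by blast
      define w where "w = map (\<lambda>j. x (- int N + of_nat j)) [0..<2 * N + 1]"
      have wL: "w \<in> language X" unfolding w_def language_def using x(1) by blast
      have "dist (\<pi> z) y < e" if z: "good z" "win z (- int N) (2 * N + 1) = w" for z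
      proof -
        have "z i = x i" if "i \<in> F" for i
        proof -
          define k where "k = nat (i + int N)"
          have k: "k < 2 * N + 1" "int k = i + int N" using N that unfolding k_def by auto
          then have "win z (- int N) (2 * N + 1) ! k = w ! k" using z(2) by simp
          then have "z (- int N + int k) = x (- int N + int k)" using k unfolding w_def by simp
          then show ?thesis using k by (simp add: algebra_simps)
        qed
        then show ?thesis using F(2) inX[OF z(1)] x by blast
      qed
      then show "\<exists>w\<in>language X. length w = 2 * N + 1 \<and> w \<noteq> [] \<and>
             (\<forall>z. good z \<and> win z (- int N) (2 * N + 1) = w \<longrightarrow> dist (\<pi> z) y < e)"
        using wL by (intro bexI[of _ w]) (auto simp: w_def)
    qed
  qed
  obtain x1 x2 where xx: "x1 \<in> X" "x2 \<in> X" "x1 \<noteq> x2" using two_distinct[OF inf] by blast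
  then obtain i0 where i0: "x1 i0 \<noteq> x2 i0" by blast
  define M0 where "M0 = nat \<bar>i0\<bar>"
  define a0 where "a0 = map (\<lambda>j. x1 (- int M0 + of_nat j)) [0..<2 * M0 + 1]"
  define a1 where "a1 = map (\<lambda>j. x2 (- int M0 + of_nat j)) [0..<2 * M0 + 1]"
  have aL: "a0 \<in> language X" "a1 \<in> language X" unfolding a0_def a1_def language_def using xx by blast+
  have ane: "a0 \<noteq> a1"
  proof
    assume e: "a0 = a1"
    define k where "k = nat (i0 + int M0)"
    have k: "k < 2 * M0 + 1" "- int M0 + int k = i0" unfolding k_def M0_def by auto
    have "a0 ! k = a1 ! k" using e by simp
    then show False using k i0 unfolding a0_def a1_def by simp
  qed
  obtain \<Phi> :: "(nat \<Rightarrow> bool) \<Rightarrow> int \<Rightarrow> 'a" where \<Phi>: "\<forall>\<omega>. good (\<Phi> \<omega>)"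
    "\<forall>\<omega> \<omega>'. \<omega> \<noteq> \<omega>' \<longrightarrow> (\<exists>i\<ge>0. \<Phi> \<omega> i \<noteq> \<Phi> \<omega>' i)"
    using cantor_family[OF aL _ ane] unfolding a0_def a1_def by auto
  have "\<exists>y1\<in>Y. \<exists>y2\<in>Y. y1 \<noteq> y2"
  proof (rule no_two_points[where R = "\<lambda>z. z" and \<Phi> = \<Phi> and XX = X and \<pi> = \<pi>])
    fix \<omega> show "\<Phi> \<omega> \<in> X" using inX \<Phi>(1) by blast
    then show "\<pi> (\<Phi> \<omega>) \<in> Y" using imX by blast
  next
    fix \<omega> \<omega>' :: "nat \<Rightarrow> bool" assume "\<omega> \<noteq> \<omega>'"
    then show "\<Phi> \<omega> \<noteq> \<Phi> \<omega>'" using \<Phi>(2) by metis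
  next
    fix y assume "y \<in> Y" then show "countable {x \<in> X. \<pi> x = y}" using fib by blast
  qed
  then obtain y1 y2 where yy: "y1 \<in> Y" "y2 \<in> Y" "y1 \<noteq> y2" by blast
  show ?thesis
    by (rule finish[of \<pi> Y g, OF E1 E2 E3 E5 yy, where en = "enum_of (language X) s"])
       (use enum_of_L[OF s_in] enum_of_surj in auto)
qed

theorem theorem4p11:
  fixes Y :: "'b::metric_space set" and g :: "'b \<Rightarrow> 'b"
  assumes "compact Y" and "continuous_on Y g" and "g ` Y \<subseteq> Y"
  shows
   "(\<forall>(X :: (nat \<Rightarrow> 'a::finite) set) \<pi>.
       one_sided_subshift X \<and> infinite X \<and> mixing_sys shift_top X shift \<and> synchronizing_subshift X \<and>
       factor_map X Y g \<pi> \<and> (\<forall>y\<in>Y. countable {x\<in>X. \<pi> x = y})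
       \<longrightarrow> (\<exists>\<epsilon>>0. \<exists>k::nat. k > 0 \<and> (\<exists>T. T \<subseteq> Y \<and> Y \<subseteq> closure T \<and> mycielski_set T \<and>
              (g ^^ k) ` T \<subseteq> T \<and> synd_eps_scrambled g \<epsilon> T)))
    \<and>
    (\<forall>(X :: (int \<Rightarrow> 'a::finite) set) \<pi>.
       two_sided_subshift X \<and> infinite X \<and> mixing_sys shift_top X shift \<and> synchronizing_subshift X \<and>
       factor_map X Y g \<pi> \<and> (\<forall>y\<in>Y. countable {x\<in>X. \<pi> x = y})
       \<longrightarrow> (\<exists>\<epsilon>>0. \<exists>k::nat. k > 0 \<and> (\<exists>T. T \<subseteq> Y \<and> Y \<subseteq> closure T \<and> mycielski_set T \<and>
              (g ^^ k) ` T \<subseteq> T \<and> synd_eps_scrambled g \<epsilon> T)))"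
  proof (intro conjI allI impI)
  fix X :: "(nat \<Rightarrow> 'a) set" and \<pi> :: "(nat \<Rightarrow> 'a) \<Rightarrow> 'b"
  assume "one_sided_subshift X \<and> infinite X \<and> mixing_sys shift_top X shift \<and> synchronizing_subshift X \<and>
       factor_map X Y g \<pi> \<and> (\<forall>y\<in>Y. countable {x\<in>X. \<pi> x = y})"
  then show "\<exists>\<epsilon>>0. \<exists>k::nat. k > 0 \<and> (\<exists>T. T \<subseteq> Y \<and> Y \<subseteq> closure T \<and> mycielski_set T \<and>
              (g ^^ k) ` T \<subseteq> T \<and> synd_eps_scrambled g \<epsilon> T)"
    using one_sided_main[of X Y g \<pi>] by blast
next
  fix X :: "(int \<Rightarrow> 'a) set" and \<pi> :: "(int \<Rightarrow> 'a) \<Rightarrow> 'b"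
  assume "two_sided_subshift X \<and> infinite X \<and> mixing_sys shift_top X shift \<and> synchronizing_subshift X \<and>
       factor_map X Y g \<pi> \<and> (\<forall>y\<in>Y. countable {x\<in>X. \<pi> x = y})"
  then show "\<exists>\<epsilon>>0. \<exists>k::nat. k > 0 \<and> (\<exists>T. T \<subseteq> Y \<and> Y \<subseteq> closure T \<and> mycielski_set T \<and>
              (g ^^ k) ` T \<subseteq> T \<and> synd_eps_scrambled g \<epsilon> T)"
    using two_sided_main[of X Y g \<pi>] by blast
qed

end
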